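(* Suppose that Assumptions (A1)–(A7) hold. Fix $0<\epsilon\le1$ and a constant $\bar m>0$ such that for every $\lambda\in[0,1]$, every $(u,m)\in C^{2,\frac12}(\mathbb{T})\times C^{2,\frac12}(\mathbb{T};(0,\infty))$ with $F(u,m,\lambda)=0$ satisfies $m>\bar m$ on $\mathbb{T}$. Let $\Lambda$ be the set of $\lambda\in[0,1]$ for which there exists $(u,m)\in C^{2,\frac12}(\mathbb{T})\times C^{2,\frac12}(\mathbb{T})$ with $m\ge\bar m$ on $\mathbb{T}$ and $F(u,m,\lambda)=0$. Then $\Lambda$ is a closed subset of $[0,1]$.
   Context: Let $\mathbb{T}=\mathbb{R}/\mathbb{Z}$ be the one-dimensional torus; functions on $\mathbb{T}$ are identified with $1$-periodic functions on $\mathbb{R}$. $C^{k,\frac12}(\mathbb{T})$ denotes the functions of class $C^k$ on $\mathbb{T}$ whose $k$-th derivative is $\frac12$-Hölder continuous, and $C^{2,\frac12}(\mathbb{T};(0,\infty))$ the positive such functions. Let $H:\mathbb{R}\to\mathbb{R}$ be of class $C^2$, $V:\mathbb{T}\to\mathbb{R}$ continuous, and $\alpha>0$. For $(u,m,\lambda)\in C^{2,\frac12}(\mathbb{T})\times C^{2,\frac12}(\mathbb{T};(0,\infty))\times[0,1]$ define $$F(u,m,\lambda)=\begin{bmatrix} u-u_{xx}+H(u_x)+\lambda V-m^\alpha-\epsilon(m-m_{xx})\\ m-m_{xx}-(H'(u_x)m)_x-1+\epsilon(u-u_{xx})\end{bmatrix}.$$ Assumptions: (A1) there exist constants $C_1,C_2,C_3>0$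 and $\gamma>1$ such that $-C_1+C_2|p|^\gamma\le H(p)\le C_1+C_3|p|^\gamma$ for all $p\in\mathbb{R}$. (A2) There exist constants $\tilde C_1,\tilde C_2,\tilde C_3>0$ such that $-\tilde C_1+\tilde C_2|p|^\gamma\le pH'(p)-H(p)\le \tilde C_1+\tilde C_3|p|^\gamma$ for all $p$ (same $\gamma$ as in (A1)). (A3) $V$ is of class $C^2$. (A4) $H$ is convex. (A5) $H$ is of class $C^4$. (A6) $\gamma<2$. (A7) There exists $\bar C>0$ with $|H'(p)|\le \bar C(1+|p|^{\gamma-1})$ for all $p$. *)

theory Defs
  imports "HOL-Analysis.Analysis"
begin

text \<open>Functions on the torus R/Z are identified with 1-periodic functions on R.\<close>
definition periodic1 :: "(real \<Rightarrow> real) \<Rightarrow> bool" where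
  "periodic1 f \<longleftrightarrow> (\<forall>x. f (x + 1) = f x)"

definition Ck :: "nat \<Rightarrow> (real \<Rightarrow> real) \<Rightarrow> bool" where
  "Ck k f \<longleftrightarrow> (\<forall>j<k. \<forall>x. ((deriv ^^ j) f) differentiable (at x))
                 \<and> continuous_on UNIV ((deriv ^^ k) f)"

definition holder_half :: "(real \<Rightarrow> real) \<Rightarrow> bool" where
  "holder_half g \<longleftrightarrow> (\<exists>C. \<forall>x y. \<bar>g x - g y\<bar> \<le> C * \<bar>x - y\<bar> powr (1/2))"

definition C2_half :: "(real \<Rightarrow> real) \<Rightarrow> bool" where
  "C2_half f \<longleftrightarrow> periodic1 f \<and> Ck 2 f \<and> holder_half ((deriv ^^ 2) f)"

definition F1 :: "(real \<Rightarrow> real) \<Rightarrow> (real \<Rightarrow> real) \<Rightarrow> real \<Rightarrow> real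
      \<Rightarrow> (real \<Rightarrow> real) \<Rightarrow> (real \<Rightarrow> real) \<Rightarrow> real \<Rightarrow> real \<Rightarrow> real" where
  "F1 H V \<alpha> \<epsilon> u m lam x =
     u x - (deriv ^^ 2) u x + H (deriv u x) + lam * V x - m x powr \<alpha>
       - \<epsilon> * (m x - (deriv ^^ 2) m x)"

definition F2 :: "(real \<Rightarrow> real) \<Rightarrow> real
      \<Rightarrow> (real \<Rightarrow> real) \<Rightarrow> (real \<Rightarrow> real) \<Rightarrow> real \<Rightarrow> real" where
  "F2 H \<epsilon> u m x =
     m x - (deriv ^^ 2) m x - deriv (\<lambda>y. deriv H (deriv u y) * m y) x - 1
       + \<epsilon> * (u x - (deriv ^^ 2) u x)"

definition F_zero :: "(real \<Rightarrow> real) \<Rightarrow> (real \<Rightarrow> real) \<Rightarrow> real \<Rightarrow> real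
      \<Rightarrow> (real \<Rightarrow> real) \<Rightarrow> (real \<Rightarrow> real) \<Rightarrow> real \<Rightarrow> bool" where
  "F_zero H V \<alpha> \<epsilon> u m lam \<longleftrightarrow>
     (\<forall>x. F1 H V \<alpha> \<epsilon> u m lam x = 0 \<and> F2 H \<epsilon> u m x = 0)"

end

theory Submission
  imports Defs "HOL-Library.Diagonal_Subsequence"
begin


lemma periodic1_nat: "periodic1 f \<Longrightarrow> f (x + real n) = f x"
proof (induction n arbitrary: x)
  case (Suc n)
  have "x + real (Suc n) = (x + real n) + 1" by simp
  then have "f (x + real (Suc n)) = f ((x + real n) + 1)" by (rule arg_cong)
  also have "\<dots> = f (x + real n)" using Suc.prems by (simp add: periodic1_def)
  also have "\<dots> = f x" using Suc.IH Suc.prems by simp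
  finally show ?case .
qed simp

lemma periodic1_nat_minus: "periodic1 f \<Longrightarrow> f (x - real n) = f x"
proof -
  assume p: "periodic1 f"
  have "f (x - real n + real n) = f (x - real n)" by (rule periodic1_nat[OF p])
  moreover have "x - real n + real n = x" by simp
  ultimately show ?thesis by simp
qed

lemma periodic1_int: "periodic1 f \<Longrightarrow> f (x + real_of_int k) = f x"
proof (cases "k \<ge> 0")
  case True
  assume p: "periodic1 f"
  from True obtain n where n: "k = int n" using nonneg_int_cases by blast
  have "real_of_int k = real n" unfolding n by (rule of_int_of_nat_eq)
  then show ?thesis using periodic1_nat[OF p, of x n] by (simp only:)
next
  case False
  assume p: "periodic1 f"
  from False have "-k \<ge> 0" by simp
  then obtain n where "-k = int n" using nonneg_int_cases by blast
  then have n: "k = - int n" by simp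
  have "x + real_of_int k = x - real n" unfolding n by simp
  then show ?thesis using periodic1_nat_minus[OF p, of x n] by (simp only:)
qed

lemma periodic1_frac: "periodic1 f \<Longrightarrow> f x = f (x - of_int \<lfloor>x\<rfloor>) \<and> x - of_int \<lfloor>x\<rfloor> \<in> {0..1}"
proof -
  assume p: "periodic1 f"
  have e: "f (x - of_int \<lfloor>x\<rfloor> + of_int \<lfloor>x\<rfloor>) = f (x - of_int \<lfloor>x\<rfloor>)" by (rule periodic1_int[OF p])
  have "x - of_int \<lfloor>x\<rfloor> + of_int \<lfloor>x\<rfloor> = x" by simp
  with e have "f x = f (x - of_int \<lfloor>x\<rfloor>)" by simp
  moreover have "x - of_int \<lfloor>x\<rfloor> \<ge> 0" by (simp add: of_int_floor_le)
  moreover have "x - of_int \<lfloor>x\<rfloor> \<le> 1" using real_of_int_floor_add_one_gt[of x] by linarith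
  ultimately show ?thesis by (simp only: atLeastAtMost_iff)
qed

lemma periodic1_bound:
  assumes "periodic1 f" "\<And>x. x \<in> {0..1} \<Longrightarrow> \<bar>f x\<bar> \<le> B"
  shows "\<bar>f x\<bar> \<le> B"
proof -
  have "f x = f (x - of_int \<lfloor>x\<rfloor>)" "x - of_int \<lfloor>x\<rfloor> \<in> {0..1}" using periodic1_frac[OF assms(1), of x] by auto
  then show ?thesis using assms(2)[of "x - of_int \<lfloor>x\<rfloor>"] by simp
qed

lemma periodic1_deriv:
  assumes "periodic1 f" "\<And>x. (f has_real_derivative f' x) (at x)"
  shows "periodic1 f'"
  unfolding periodic1_def
proof
  fix x
  have "((\<lambda>y. f (y + 1)) has_real_derivative f' (x + 1)) (at x)"
  proof -
    have "((\<lambda>y. y + 1) has_real_derivative 1) (at x)" by (auto intro!: derivative_eq_intros)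
    from DERIV_chain2[OF assms(2)[of "x+1"] this] show ?thesis by simp
  qed
  moreover have "(\<lambda>y. f (y + 1)) = f" using assms(1) by (auto simp: periodic1_def)
  ultimately have "(f has_real_derivative f' (x + 1)) (at x)" by simp
  from DERIV_unique[OF this assms(2)[of x]] show "f' (x + 1) = f' x" .
qed

lemma periodic1_bounded:
  assumes "periodic1 f" "continuous_on UNIV f"
  shows "\<exists>B. \<forall>x. \<bar>f x\<bar> \<le> B"
proof -
  have "compact (f ` {0..1})" by (rule compact_continuous_image) (auto intro: continuous_on_subset[OF assms(2)])
  then have "bounded (f ` {0..1})" by (rule compact_imp_bounded)
  then obtain B where B: "\<forall>y\<in>f ` {0..1}. norm y \<le> B" unfolding bounded_iff by blast
  have "\<bar>f x\<bar> \<le> B" for x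
  proof (rule periodic1_bound[OF assms(1)])
    fix y :: real assume "y \<in> {0..1}" then show "\<bar>f y\<bar> \<le> B" using B by auto
  qed
  then show ?thesis by blast
qed

lemma cint: "continuous_on UNIV f \<Longrightarrow> (f::real\<Rightarrow>real) integrable_on {a..b}"
  by (rule integrable_continuous_interval) (rule continuous_on_subset, auto)

lemma deriv_cont:
  fixes g :: "real \<Rightarrow> real"
  assumes "\<And>x. (g has_real_derivative g' x) (at x)"
  shows "continuous_on UNIV g"
  by (rule continuous_at_imp_continuous_on) (use assms DERIV_isCont in blast)

lemma ftc_real:
  fixes g :: "real \<Rightarrow> real"
  assumes "\<And>x. (g has_real_derivative g' x) (at x)" "a \<le> b"
  shows "(g' has_integral (g b - g a)) {a..b}"
proof (rule fundamental_theorem_of_calculus[OF assms(2)])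
  fix x assume "x \<in> {a..b}"
  have "(g has_vector_derivative g' x) (at x)"
    using assms(1) has_real_derivative_iff_has_vector_derivative by blast
  then show "(g has_vector_derivative g' x) (at x within {a..b})"
    by (rule has_vector_derivative_at_within)
qed

lemma ftc_integral:
  fixes g :: "real \<Rightarrow> real"
  assumes "\<And>x. (g has_real_derivative g' x) (at x)" "a \<le> b"
  shows "integral {a..b} g' = g b - g a"
  using ftc_real[OF assms] by (rule integral_unique)

lemma periodic_integral_deriv_zero:
  fixes W :: "real \<Rightarrow> real"
  assumes "periodic1 W" "\<And>x. (W has_real_derivative W' x) (at x)"
  shows "integral {0..1} W' = 0"
proof -
  have "integral {0..1} W' = W 1 - W 0" by (rule ftc_integral[OF assms(2)]) simp
  moreover have "W (0 + 1) = W 0" using assms(1) unfolding periodic1_def by blast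
  ultimately show ?thesis by simp
qed

lemma abs_integral_le:
  fixes f :: "real \<Rightarrow> real"
  assumes "continuous_on UNIV f" "a \<le> b"
  shows "\<bar>integral {a..b} f\<bar> \<le> integral {a..b} (\<lambda>t. \<bar>f t\<bar>)"
proof -
  have ca: "continuous_on UNIV (\<lambda>t. \<bar>f t\<bar>)" using assms(1) by (intro continuous_intros)
  have cm: "continuous_on UNIV (\<lambda>t. - f t)" using assms(1) by (intro continuous_intros)
  have "integral {a..b} f \<le> integral {a..b} (\<lambda>t. \<bar>f t\<bar>)"
    by (rule integral_le[OF cint[OF assms(1)] cint[OF ca]]) simp
  moreover have "integral {a..b} (\<lambda>t. - f t) \<le> integral {a..b} (\<lambda>t. \<bar>f t\<bar>)"
    by (rule integral_le[OF cint[OF cm] cint[OF ca]]) simp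
  moreover have "integral {a..b} (\<lambda>t. - f t) = - integral {a..b} f" by (rule integral_neg)
  ultimately show ?thesis by linarith
qed

lemma sup_bound:
  fixes g :: "real \<Rightarrow> real"
  assumes d: "\<And>x. (g has_real_derivative g' x) (at x)" and c: "continuous_on UNIV g'" and x: "x \<in> {0..1}"
  shows "\<bar>g x\<bar> \<le> integral {0..1} (\<lambda>t. \<bar>g t\<bar>) + integral {0..1} (\<lambda>t. \<bar>g' t\<bar>)"
proof -
  have cg: "continuous_on UNIV g" by (rule deriv_cont[OF d])
  have cga: "continuous_on UNIV (\<lambda>t. \<bar>g t\<bar>)" using cg by (intro continuous_intros)
  have cg'a: "continuous_on UNIV (\<lambda>t. \<bar>g' t\<bar>)" using c by (intro continuous_intros)
  obtain y where y: "y \<in> {0..1}" "\<And>t. t \<in> {0..1} \<Longrightarrow> \<bar>g y\<bar> \<le> \<bar>g t\<bar>"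
    using continuous_attains_inf[of "{0..1::real}" "\<lambda>t. \<bar>g t\<bar>"] continuous_on_subset[OF cga]
    by auto
  have "\<bar>g y\<bar> = integral {0..1::real} (\<lambda>_. \<bar>g y\<bar>)" by simp
  also have "\<dots> \<le> integral {0..1} (\<lambda>t. \<bar>g t\<bar>)"
    by (rule integral_le[OF integrable_const_ivl cint[OF cga]]) (use y in auto)
  finally have 1: "\<bar>g y\<bar> \<le> integral {0..1} (\<lambda>t. \<bar>g t\<bar>)" .
  define a where "a = min x y"
  define b where "b = max x y"
  have ab: "a \<le> b" "{a..b} \<subseteq> {0..1}" using x y unfolding a_def b_def by auto
  have "\<bar>g b - g a\<bar> = \<bar>integral {a..b} g'\<bar>" using ftc_integral[OF d ab(1)] by simp
  also have "\<dots> \<le> integral {a..b} (\<lambda>t. \<bar>g' t\<bar>)" by (rule abs_integral_le[OF c ab(1)])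
  also have "\<dots> \<le> integral {0..1} (\<lambda>t. \<bar>g' t\<bar>)"
    by (rule integral_subset_le[OF ab(2) cint[OF cg'a] cint[OF cg'a]]) simp
  finally have 2: "\<bar>g b - g a\<bar> \<le> integral {0..1} (\<lambda>t. \<bar>g' t\<bar>)" .
  have "\<bar>g x - g y\<bar> = \<bar>g b - g a\<bar>" unfolding a_def b_def by (cases "x \<le> y") (auto simp: min_def max_def)
  with 1 2 show ?thesis by linarith
qed

lemma pointwise_subseq:
  fixes f :: "nat \<Rightarrow> real \<Rightarrow> real"
  assumes bdd: "\<And>n x. \<bar>f n x\<bar> \<le> M"
    and lip: "\<And>n x y. \<bar>f n x - f n y\<bar> \<le> L * \<bar>x - y\<bar>"
  shows "\<exists>d. strict_mono (d::nat\<Rightarrow>nat) \<and> (\<forall>x. convergent (\<lambda>n. f (d n) x))"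
proof -
  obtain m :: "real \<Rightarrow> nat" where "bij_betw m \<rat> UNIV"
    using countable_rat Rats_infinite by (erule countableE_infinite)
  then obtain r :: "nat \<Rightarrow> real" where bij: "bij_betw r UNIV \<rat>"
    using bij_betw_inv by blast
  have dense_r: "\<And>x y. x < y \<Longrightarrow> \<exists>n. x < r n \<and> r n < y"
    by (metis Rats_dense_in_real bij f_the_inv_into_f bij_betw_def)
  let ?P = "\<lambda>n. \<lambda>s. convergent (\<lambda>k. f (s k) (r n))"
  interpret nat: subseqs ?P
  proof (unfold convergent_def, unfold subseqs_def, auto)
    fix n :: nat and s :: "nat \<Rightarrow> nat" assume s: "strict_mono s"
    have "bounded {-M..M}"
      using bounded_closed_interval by auto
    moreover have "\<And>k. f (s k) (r n) \<in> {-M..M}"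
      using bdd by (simp add: abs_le_iff minus_le_iff)
    ultimately have "\<exists>l s'. strict_mono s' \<and> ((\<lambda>k. f (s k) (r n)) \<circ> s') \<longlonglongrightarrow> l"
      using compact_Icc compact_imp_seq_compact seq_compactE by metis
    thus "\<exists>s'. strict_mono (s'::nat\<Rightarrow>nat) \<and> (\<exists>l. (\<lambda>k. f (s (s' k)) (r n)) \<longlonglongrightarrow> l)"
      by (auto simp: comp_def)
  qed
  define d where "d = nat.diagseq"
  have subseq: "strict_mono d"
    unfolding d_def using nat.subseq_diagseq by auto
  have rat_cnv: "?P n d" for n
  proof -
    have Pn_seqseq: "?P n (nat.seqseq (Suc n))"
      by (rule nat.seqseq_holds)
    have 1: "(\<lambda>k. f ((nat.seqseq (Suc n) \<circ> (\<lambda>k. nat.fold_reduce (Suc n) k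
      (Suc n + k))) k) (r n)) = (\<lambda>k. f (nat.seqseq (Suc n) k) (r n)) \<circ>
      (\<lambda>k. nat.fold_reduce (Suc n) k (Suc n + k))"
      by auto
    have 2: "?P n (d \<circ> ((+) (Suc n)))"
      unfolding d_def nat.diagseq_seqseq 1
      by (intro convergent_subseq_convergent Pn_seqseq nat.subseq_diagonal_rest)
    then obtain L where 3: "(\<lambda>na. f (d (na + Suc n)) (r n)) \<longlonglongrightarrow> L"
      by (auto simp: add.commute dest: convergentD)
    then have "(\<lambda>k. f (d k) (r n)) \<longlonglongrightarrow> L"
      by (rule LIMSEQ_offset)
    then show ?thesis
      by (auto simp: convergent_def)
  qed
  have "convergent (\<lambda>n. f (d n) x)" for x
  proof -
    have "Cauchy (\<lambda>n. f (d n) x)"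
      unfolding Cauchy_def
    proof (intro allI impI)
      fix e :: real assume e: "e > 0"
      define \<delta> where "\<delta> = e / (3 * (\<bar>L\<bar> + 1))"
      have \<delta>: "\<delta> > 0" unfolding \<delta>_def using e by (simp add: add_pos_nonneg)
      obtain k where k: "x - \<delta> < r k" "r k < x + \<delta>" using dense_r[of "x - \<delta>" "x + \<delta>"] \<delta> by auto
      have "Cauchy (\<lambda>n. f (d n) (r k))" using rat_cnv[of k] convergent_Cauchy by blast
      then obtain N where N: "\<And>m n. m \<ge> N \<Longrightarrow> n \<ge> N \<Longrightarrow> dist (f (d m) (r k)) (f (d n) (r k)) < e/3"
        unfolding Cauchy_def using e by (meson divide_pos_pos zero_less_numeral)
      have Ld: "\<bar>L\<bar> * \<delta> \<le> e/3" unfolding \<delta>_def using e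
        by (simp add: field_simps)
      have "dist (f (d m) x) (f (d n) x) < e" if "m \<ge> N" "n \<ge> N" for m n
      proof -
        have xk: "\<bar>x - r k\<bar> < \<delta>" using k by auto
        have a: "\<bar>f (d m) x - f (d m) (r k)\<bar> \<le> \<bar>L\<bar> * \<delta>"
        proof -
          have "\<bar>f (d m) x - f (d m) (r k)\<bar> \<le> L * \<bar>x - r k\<bar>" by (rule lip)
          also have "\<dots> \<le> \<bar>L\<bar> * \<delta>" using xk by (intro mult_mono) auto
          finally show ?thesis .
        qed
        have b: "\<bar>f (d n) x - f (d n) (r k)\<bar> \<le> \<bar>L\<bar> * \<delta>"
        proof -
          have "\<bar>f (d n) x - f (d n) (r k)\<bar> \<le> L * \<bar>x - r k\<bar>" by (rule lip)
          also have "\<dots> \<le> \<bar>L\<bar> * \<delta>" using xk by (intro mult_mono) auto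
          finally show ?thesis .
        qed
        have c: "\<bar>f (d m) (r k) - f (d n) (r k)\<bar> < e/3" using N[OF that] by (simp add: dist_real_def)
        show ?thesis unfolding dist_real_def using a b c Ld by linarith
      qed
      then show "\<exists>M. \<forall>m\<ge>M. \<forall>n\<ge>M. dist (f (d m) x) (f (d n) x) < e" by blast
    qed
    then show ?thesis using Cauchy_convergent_iff by blast
  qed
  with subseq show ?thesis by blast
qed

lemma lip_cont:
  fixes F :: "real \<Rightarrow> real"
  assumes "\<And>x y. \<bar>F x - F y\<bar> \<le> B * \<bar>x - y\<bar>" "B \<ge> 0"
  shows "continuous_on UNIV F"
  by (rule lipschitz_on_continuous_on[of B]) (rule lipschitz_onI, use assms in \<open>auto simp: dist_real_def\<close>)

lemma int_limit:
  fixes F f :: "nat \<Rightarrow> real \<Rightarrow> real"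
  assumes d: "\<And>n x. (F n has_real_derivative f n x) (at x)"
    and b: "\<And>n x. \<bar>f n x\<bar> \<le> B"
    and cF: "\<And>x. (\<lambda>n. F n x) \<longlonglongrightarrow> G x"
    and cf: "\<And>x. (\<lambda>n. f n x) \<longlonglongrightarrow> g x"
    and xy: "x \<le> y"
  shows "g integrable_on {x..y}" "G y - G x = integral {x..y} g"
proof -
  have fi: "(f n) integrable_on {x..y}" for n using ftc_real[OF d xy] by blast
  have hi: "(\<lambda>_. B) integrable_on {x..y}" by (rule integrable_const_ivl)
  have le: "norm (f n t) \<le> B" for n t using b by simp
  note dc = dominated_convergence[of f "{x..y}" "\<lambda>_. B" g, OF fi hi le cf]
  show "g integrable_on {x..y}" by (rule dc(1))
  have "(\<lambda>n. integral {x..y} (f n)) \<longlonglongrightarrow> integral {x..y} g" by (rule dc(2))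
  moreover have "integral {x..y} (f n) = F n y - F n x" for n by (rule ftc_integral[OF d xy])
  ultimately have "(\<lambda>n. F n y - F n x) \<longlonglongrightarrow> integral {x..y} g" by simp
  moreover have "(\<lambda>n. F n y - F n x) \<longlonglongrightarrow> G y - G x" by (intro tendsto_intros cF)
  ultimately show "G y - G x = integral {x..y} g" using LIMSEQ_unique by blast
qed

lemma int_lip:
  fixes G g :: "real \<Rightarrow> real"
  assumes i: "\<And>x y. x \<le> y \<Longrightarrow> g integrable_on {x..y} \<and> G y - G x = integral {x..y} g"
    and b: "\<And>x. \<bar>g x\<bar> \<le> B"
  shows "\<bar>G x - G y\<bar> \<le> B * \<bar>x - y\<bar>"
proof -
  have *: "\<bar>G y - G x\<bar> \<le> B * (y - x)" if xy: "x \<le> y" for x y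
  proof -
    have gi: "g integrable_on {x..y}" and e: "G y - G x = integral {x..y} g" using i[OF xy] by auto
    have "integral {x..y} g \<le> integral {x..y} (\<lambda>_. B)"
      by (rule integral_le[OF gi]) (use b[unfolded abs_le_iff] in auto)
    moreover have "integral {x..y} (\<lambda>_. -B) \<le> integral {x..y} g"
      by (rule integral_le[OF _ gi]) (use b[unfolded abs_le_iff] in \<open>auto simp: minus_le_iff\<close>)
    ultimately show ?thesis using e xy by (auto simp: abs_le_iff mult.commute)
  qed
  show ?thesis
  proof (cases "x \<le> y")
    case True then show ?thesis using *[OF True] by (simp add: abs_minus_commute)
  next
    case False then show ?thesis using *[of y x] by simp
  qed
qed

lemma int_deriv:
  fixes G g :: "real \<Rightarrow> real"
  assumes i: "\<And>x y. x \<le> y \<Longrightarrow> G y - G x = integral {x..y} g"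
    and c: "continuous_on UNIV g"
  shows "(G has_real_derivative g x) (at x)"
proof -
  define a where "a = x - 1"
  define b where "b = x + 1"
  have xi: "x \<in> {a..b}" "x \<in> interior {a..b}" unfolding a_def b_def by auto
  have "((\<lambda>t. integral {a..t} g) has_real_derivative g x) (at x within {a..b})"
    by (rule integral_has_real_derivative[OF continuous_on_subset[OF c] xi(1)]) auto
  then have "((\<lambda>t. integral {a..t} g) has_real_derivative g x) (at x)"
    using at_within_interior[OF xi(2)] by simp
  then have "((\<lambda>t. G a + integral {a..t} g) has_real_derivative g x) (at x)"
    by (auto intro!: derivative_eq_intros)
  then show ?thesis
  proof (rule has_field_derivative_transform_within_open[of _ _ _ "{a<..<b}"])
    show "open {a<..<b}" by simp
    show "x \<in> {a<..<b}" unfolding a_def b_def by simp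
    fix t assume "t \<in> {a<..<b}"
    then have "a \<le> t" by simp
    then show "G a + integral {a..t} g = G t" using i[of a t] by simp
  qed
qed

lemma holder_from_C1:
  fixes f f' :: "real \<Rightarrow> real"
  assumes p: "periodic1 f" and d: "\<And>x. (f has_real_derivative f' x) (at x)"
    and c: "continuous_on UNIV f'"
  shows "holder_half f"
proof -
  have p': "periodic1 f'" by (rule periodic1_deriv[OF p d])
  obtain L0 where L0: "\<And>x. \<bar>f' x\<bar> \<le> L0" using periodic1_bounded[OF p' c] by blast
  define L where "L = max L0 0"
  have L: "\<And>x. \<bar>f' x\<bar> \<le> L" "L \<ge> 0" unfolding L_def using L0 by (auto intro: max.coboundedI1)
  obtain M0 where M0: "\<And>x. \<bar>f x\<bar> \<le> M0" using periodic1_bounded[OF p deriv_cont[OF d]] by blast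
  define M where "M = max M0 0"
  have M: "\<And>x. \<bar>f x\<bar> \<le> M" "M \<ge> 0" unfolding M_def using M0 by (auto intro: max.coboundedI1)
  have lip: "\<bar>f x - f y\<bar> \<le> L * \<bar>x - y\<bar>" for x y
  proof (rule int_lip[OF _ L(1)])
    fix a b :: real assume ab: "a \<le> b"
    show "f' integrable_on {a..b} \<and> f b - f a = integral {a..b} f'"
      using ftc_real[OF d ab] by (auto simp: integral_unique)
  qed
  have "\<bar>f x - f y\<bar> \<le> (L + 2 * M) * \<bar>x - y\<bar> powr (1/2)" for x y
  proof (cases "\<bar>x - y\<bar> \<le> 1")
    case True
    have "\<bar>x - y\<bar> = \<bar>x - y\<bar> powr 1" by simp
    also have "\<dots> \<le> \<bar>x - y\<bar> powr (1/2)" by (rule powr_mono') (use True in auto)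
    finally have "L * \<bar>x - y\<bar> \<le> L * \<bar>x - y\<bar> powr (1/2)" using L(2) by (rule mult_left_mono)
    moreover have "0 \<le> 2 * M * \<bar>x - y\<bar> powr (1/2)" using M(2) by simp
    ultimately show ?thesis using lip[of x y] by (simp add: distrib_right)
  next
    case False
    have "1 \<le> \<bar>x - y\<bar> powr (1/2)" by (rule ge_one_powr_ge_zero) (use False in auto)
    then have "2 * M * 1 \<le> 2 * M * \<bar>x - y\<bar> powr (1/2)" using M(2) by (intro mult_left_mono) auto
    moreover have "0 \<le> L * \<bar>x - y\<bar> powr (1/2)" using L(2) by simp
    moreover have "\<bar>f x - f y\<bar> \<le> 2 * M" using M(1)[of x] M(1)[of y] by linarith
    ultimately show ?thesis by (simp add: distrib_right)
  qed
  then show ?thesis unfolding holder_half_def by blast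
qed




lemma int_le_const:
  fixes f Sf :: "real \<Rightarrow> real"
  assumes cf: "continuous_on UNIV f" and cS: "continuous_on UNIV Sf"
    and le: "\<And>x. x \<in> {0..1} \<Longrightarrow> f x \<le> A + Bc * Sf x"
    and S0: "integral {0..1} Sf \<le> S0" and Bc: "Bc \<ge> 0"
  shows "integral {0..1} f \<le> A + Bc * S0"
proof -
  have c2: "continuous_on UNIV (\<lambda>x. A + Bc * Sf x)" using cS by (intro continuous_intros)
  have "integral {0..1} f \<le> integral {0..1} (\<lambda>x. A + Bc * Sf x)"
    by (rule integral_le[OF cint[OF cf] cint[OF c2]]) (rule le)
  also have "integral {0..1} (\<lambda>x. A + Bc * Sf x) = A + Bc * integral {0..1} Sf"
  proof -
    have h1: "((\<lambda>x. A) has_integral A) {0..1::real}"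
      using has_integral_const_real[of A 0 "1::real"] by simp
    have h2: "((\<lambda>x. Bc * Sf x) has_integral (Bc * integral {0..1} Sf)) {0..1}"
      by (rule has_integral_mult_right[OF integrable_integral[OF cint[OF cS]]])
    show ?thesis using has_integral_add[OF h1 h2] by (rule integral_unique)
  qed
  also have "\<dots> \<le> A + Bc * S0" using S0 Bc by (simp add: mult_left_mono)
  finally show ?thesis .
qed

lemma sup_bound2:
  fixes g g' Sf :: "real \<Rightarrow> real"
  assumes d: "\<And>x. (g has_real_derivative g' x) (at x)" and c: "continuous_on UNIV g'"
    and cS: "continuous_on UNIV Sf"
    and le: "\<And>x. x \<in> {0..1} \<Longrightarrow> \<bar>g x\<bar> + \<bar>g' x\<bar> \<le> A + Bc * Sf x"
    and S0: "integral {0..1} Sf \<le> S0" and Bc: "Bc \<ge> 0" and x: "x \<in> {0..1}"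
  shows "\<bar>g x\<bar> \<le> A + Bc * S0"
proof -
  have cg: "continuous_on UNIV g" by (rule deriv_cont[OF d])
  have c1: "continuous_on UNIV (\<lambda>t. \<bar>g t\<bar>)" using cg by (intro continuous_intros)
  have c2: "continuous_on UNIV (\<lambda>t. \<bar>g' t\<bar>)" using c by (intro continuous_intros)
  have c3: "continuous_on UNIV (\<lambda>t. \<bar>g t\<bar> + \<bar>g' t\<bar>)" by (rule continuous_on_add[OF c1 c2])
  have "\<bar>g x\<bar> \<le> integral {0..1} (\<lambda>t. \<bar>g t\<bar>) + integral {0..1} (\<lambda>t. \<bar>g' t\<bar>)"
    by (rule sup_bound[OF d c x])
  also have "\<dots> = integral {0..1} (\<lambda>t. \<bar>g t\<bar> + \<bar>g' t\<bar>)"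
    by (rule integral_add[symmetric, OF cint[OF c1] cint[OF c2]])
  also have "\<dots> \<le> A + Bc * S0" by (rule int_le_const[OF c3 cS le S0 Bc])
  finally show ?thesis .
qed

lemma Ck_deriv:
  assumes "Ck k f" "j < k"
  shows "((deriv ^^ j) f has_real_derivative (deriv ^^ Suc j) f x) (at x)"
  using assms unfolding Ck_def by (simp add: DERIV_deriv_iff_real_differentiable)

lemma pow_le_sq:
  fixes p e :: real
  assumes "0 \<le> e" "e \<le> 2"
  shows "\<bar>p\<bar> powr e \<le> 1 + p\<^sup>2"
proof (cases "\<bar>p\<bar> \<le> 1")
  case True
  then have "\<bar>p\<bar> powr e \<le> 1" using assms by (intro powr_le1) auto
  then show ?thesis by (smt (verit) zero_le_power2)
next
  case False
  then have "\<bar>p\<bar> powr e \<le> \<bar>p\<bar> powr 2" using assms by (intro powr_mono) auto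
  also have "\<dots> = p\<^sup>2" using False by simp
  finally show ?thesis by simp
qed

lemma amgm:
  fixes c x e :: real
  assumes "e > 0"
  shows "c * x \<le> e / 2 * x\<^sup>2 + c\<^sup>2 / (2 * e)"
proof -
  have "0 \<le> (e * x - c)\<^sup>2" by simp
  then have "2 * e * (c * x) \<le> e * e * x\<^sup>2 + c\<^sup>2" by (simp add: power2_eq_square algebra_simps)
  then show ?thesis using assms by (simp add: field_simps power2_eq_square)
qed

locale mfg =
  fixes H V :: "real \<Rightarrow> real" and \<alpha> \<gamma> \<epsilon> a1 b1 b3 Cb KV :: real
  assumes H4: "Ck 4 H" and Vp: "periodic1 V" and V2: "Ck 2 V" and alpha: "\<alpha> > 0"
    and g1: "1 < \<gamma>" and g2: "\<gamma> < 2" and conv: "convex_on UNIV H"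
    and eps: "0 < \<epsilon>" "\<epsilon> \<le> 1"
    and A1l: "\<And>p. - b1 \<le> H p" and A1u: "\<And>p. H p \<le> b1 + b3 * \<bar>p\<bar> powr \<gamma>"
    and b13: "b1 \<ge> 0" "b3 \<ge> 0"
    and A2l: "\<And>p. - a1 \<le> p * deriv H p - H p" and a1: "a1 \<ge> 0"
    and A7u: "\<And>p. \<bar>deriv H p\<bar> \<le> Cb * (1 + \<bar>p\<bar> powr (\<gamma> - 1))" and Cb: "Cb \<ge> 0"
    and KVb: "\<And>x. \<bar>V x\<bar> \<le> KV" and KV: "KV \<ge> 0"
begin

abbreviation "H1 \<equiv> deriv H"
abbreviation "H2 \<equiv> deriv (deriv H)"
abbreviation "H3 \<equiv> deriv (deriv (deriv H))"
abbreviation "V1 \<equiv> deriv V"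

lemma dH: "(H has_real_derivative H1 p) (at p)" using Ck_deriv[OF H4, of 0] by simp
lemma dH1: "(H1 has_real_derivative H2 p) (at p)" using Ck_deriv[OF H4, of 1] by simp
lemma dH2: "(H2 has_real_derivative H3 p) (at p)"
  using Ck_deriv[OF H4, of 2] by (simp add: numeral_2_eq_2)
lemma dH3: "(H3 has_real_derivative deriv H3 p) (at p)"
  using Ck_deriv[OF H4, of 3] by (simp add: numeral_3_eq_3)
lemma dV: "(V has_real_derivative V1 x) (at x)" using Ck_deriv[OF V2, of 0] by simp
lemma dV1: "(V1 has_real_derivative deriv V1 x) (at x)" using Ck_deriv[OF V2, of 1] by simp

lemma cH: "continuous_on UNIV H" by (rule deriv_cont[OF dH])
lemma cH1: "continuous_on UNIV H1" by (rule deriv_cont[OF dH1])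
lemma cH2: "continuous_on UNIV H2" by (rule deriv_cont[OF dH2])
lemma cH3: "continuous_on UNIV H3" by (rule deriv_cont[OF dH3])
lemma cV: "continuous_on UNIV V" by (rule deriv_cont[OF dV])
lemma cV1: "continuous_on UNIV V1" by (rule deriv_cont[OF dV1])

lemma cH_c [continuous_intros]: "continuous_on S f \<Longrightarrow> continuous_on S (\<lambda>x. H (f x))"
  by (rule continuous_on_compose2[OF cH]) auto
lemma cH1_c [continuous_intros]: "continuous_on S f \<Longrightarrow> continuous_on S (\<lambda>x. H1 (f x))"
  by (rule continuous_on_compose2[OF cH1]) auto
lemma cH2_c [continuous_intros]: "continuous_on S f \<Longrightarrow> continuous_on S (\<lambda>x. H2 (f x))"
  by (rule continuous_on_compose2[OF cH2]) auto
lemma cH3_c [continuous_intros]: "continuous_on S f \<Longrightarrow> continuous_on S (\<lambda>x. H3 (f x))"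
  by (rule continuous_on_compose2[OF cH3]) auto

lemma tH [tendsto_intros]: "(f \<longlongrightarrow> l) F \<Longrightarrow> ((\<lambda>x. H (f x)) \<longlongrightarrow> H l) F"
  by (rule isCont_tendsto_compose[of l H]) (use cH continuous_on_eq_continuous_at in auto)
lemma tH1 [tendsto_intros]: "(f \<longlongrightarrow> l) F \<Longrightarrow> ((\<lambda>x. H1 (f x)) \<longlongrightarrow> H1 l) F"
  by (rule isCont_tendsto_compose[of l H1]) (use cH1 continuous_on_eq_continuous_at in auto)
lemma tH2 [tendsto_intros]: "(f \<longlongrightarrow> l) F \<Longrightarrow> ((\<lambda>x. H2 (f x)) \<longlongrightarrow> H2 l) F"
  by (rule isCont_tendsto_compose[of l H2]) (use cH2 continuous_on_eq_continuous_at in auto)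

lemma dH_c [derivative_intros]:
  "(f has_real_derivative f') (at x within s) \<Longrightarrow> ((\<lambda>y. H (f y)) has_real_derivative H1 (f x) * f') (at x within s)"
  by (rule DERIV_chain2[OF dH])
lemma dH1_c [derivative_intros]:
  "(f has_real_derivative f') (at x within s) \<Longrightarrow> ((\<lambda>y. H1 (f y)) has_real_derivative H2 (f x) * f') (at x within s)"
  by (rule DERIV_chain2[OF dH1])
lemma dH2_c [derivative_intros]:
  "(f has_real_derivative f') (at x within s) \<Longrightarrow> ((\<lambda>y. H2 (f y)) has_real_derivative H3 (f x) * f') (at x within s)"
  by (rule DERIV_chain2[OF dH2])

lemma H1_mono:
  assumes "x \<le> y" shows "H1 x \<le> H1 y"
proof -
  have t: "H1 x' * (y' - x') \<le> H y' - H x'" for x' y'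
    by (rule convex_on_imp_above_tangent[OF conv]) (auto intro: has_field_derivative_at_within dH)
  show ?thesis
  proof (cases "x = y")
    case False
    with assms have xy: "0 < y - x" by simp
    have "H1 x * (y - x) \<le> H1 y * (y - x)" using t[of x y] t[of y x] by (simp add: algebra_simps)
    then show ?thesis using xy by simp
  qed simp
qed

lemma H2_nonneg: "H2 p \<ge> 0"
  by (rule mono_on_imp_deriv_nonneg[of UNIV H1 _ p]) (auto intro: mono_onI H1_mono dH1)


definition "cK = KV + a1"
definition "cc0 = (1 + cK)\<^sup>2 / (2 * \<epsilon>)"
definition "cS0 = 2 * (cK + cc0) / \<epsilon>"
definition "cM0 = 1 + 1/2 * cS0"
definition "cP0 = (1 + 2 * cM0 + b1 + b3 + KV + cM0 powr \<alpha>) + (1/2 + b3) * cS0"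
definition "cQ0 = (2 + 2 * Cb * cM0 + 2 * cM0) + (1/2 + Cb * cM0) * cS0"
definition "cU1 = cQ0 + cP0 + \<bar>H1 0\<bar> * cM0"
definition "cM1 = (cU1 + cP0) / \<epsilon>"
definition "cF1 = 2 * cM0 + b1 + b3 * (1 + cU1\<^sup>2) + KV + cM0 powr \<alpha>"
definition "cG = 2 * cM0 + 1 + Cb * (2 + cU1\<^sup>2) * cM1"
definition "cU2 = cF1 + cG"

lemma cK_nn: "cK \<ge> 0" unfolding cK_def using KV a1 by simp
lemma cS0_nn: "cS0 \<ge> 0" unfolding cS0_def cc0_def using cK_nn eps by simp
lemma cM0_pos: "cM0 > 0" unfolding cM0_def using cS0_nn by simp

lemma H_abs: "\<bar>H p\<bar> \<le> b1 + b3 * (1 + p\<^sup>2)"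
proof -
  have "\<bar>p\<bar> powr \<gamma> \<le> 1 + p\<^sup>2" using g1 g2 by (intro pow_le_sq) auto
  then have "b3 * \<bar>p\<bar> powr \<gamma> \<le> b3 * (1 + p\<^sup>2)" by (rule mult_left_mono) (use b13 in auto)
  moreover have "0 \<le> b3 * \<bar>p\<bar> powr \<gamma>" using b13 by simp
  ultimately show ?thesis using A1l[of p] A1u[of p] by linarith
qed

lemma H1_abs: "\<bar>H1 p\<bar> \<le> Cb * (2 + p\<^sup>2)"
proof -
  have "\<bar>p\<bar> powr (\<gamma> - 1) \<le> 1 + p\<^sup>2" using g1 g2 by (intro pow_le_sq) auto
  then have "Cb * (1 + \<bar>p\<bar> powr (\<gamma> - 1)) \<le> Cb * (2 + p\<^sup>2)" using Cb by (intro mult_left_mono) auto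
  then show ?thesis using A7u[of p] by linarith
qed

end

lemma abs5: "\<bar>a + b + c - d - e\<bar> \<le> \<bar>a\<bar> + \<bar>b\<bar> + \<bar>c\<bar> + \<bar>d\<bar> + \<bar>e::real\<bar>"
  by (smt (verit))
lemma abs3p: "\<bar>a + b + c\<bar> \<le> \<bar>a\<bar> + \<bar>b\<bar> + \<bar>c::real\<bar>"
  by (smt (verit))
lemma abs3m: "\<bar>a + b - c\<bar> \<le> \<bar>a\<bar> + \<bar>b\<bar> + \<bar>c::real\<bar>"
  by (smt (verit))
lemma abs_q: "\<bar>a - 1 + b\<bar> \<le> \<bar>a\<bar> + 1 + \<bar>b::real\<bar>"
  by (smt (verit))
lemma abs_g: "\<bar>a - 1 + b - c\<bar> \<le> \<bar>a\<bar> + 1 + \<bar>b\<bar> + \<bar>c::real\<bar>"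
  by (smt (verit))

lemma absq: "2 * \<bar>a::real\<bar> \<le> 1 + a\<^sup>2"
proof -
  have "0 \<le> (\<bar>a\<bar> - 1)\<^sup>2" by simp
  then show ?thesis by (simp add: power2_eq_square algebra_simps abs_mult_self_eq)
qed

lemma energy_alg:
  fixes u u1 u2 m m1 m2 h h1 h2 v mp lam e :: real
  assumes e1: "u - u2 + h + lam * v - mp - e * (m - m2) = 0"
    and e2: "m - m2 - (h2 * u2 * m + h1 * m1) - 1 + e * (u - u2) = 0"
  shows "(u1 * h1 - h) * m + mp * m + e * (u\<^sup>2 + u1\<^sup>2 + m\<^sup>2 + m1\<^sup>2) = u + lam * v * m -
     (u2 * m + u1 * m1 - (u1 * m1 + u * m2) - (h2 * u2 * m * u + h1 * (m1 * u + m * u1))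
       - e * (u1 * u1 + u * u2) - e * (m1 * m1 + m * m2))"
proof -
  have "(u1 * h1 - h) * m + mp * m + e * (u\<^sup>2 + u1\<^sup>2 + m\<^sup>2 + m1\<^sup>2) - (u + lam * v * m -
     (u2 * m + u1 * m1 - (u1 * m1 + u * m2) - (h2 * u2 * m * u + h1 * (m1 * u + m * u1))
       - e * (u1 * u1 + u * u2) - e * (m1 * m1 + m * m2)))
    = (m - m2 - (h2 * u2 * m + h1 * m1) - 1 + e * (u - u2)) * u - (u - u2 + h + lam * v - mp - e * (m - m2)) * m"
    by (simp add: algebra_simps power2_eq_square)
  with e1 e2 show ?thesis by simp
qed

locale sol = mfg +
  fixes lam :: real and u u1 u2 m m1 m2 :: "real \<Rightarrow> real"
  assumes lam: "0 \<le> lam" "lam \<le> 1"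
    and pu: "periodic1 u" and pm: "periodic1 m"
    and du: "\<And>x. (u has_real_derivative u1 x) (at x)"
    and du1: "\<And>x. (u1 has_real_derivative u2 x) (at x)"
    and cu2: "continuous_on UNIV u2"
    and dm: "\<And>x. (m has_real_derivative m1 x) (at x)"
    and dm1: "\<And>x. (m1 has_real_derivative m2 x) (at x)"
    and cm2: "continuous_on UNIV m2"
    and mpos: "\<And>x. m x > 0"
    and E1: "\<And>x. u x - u2 x + H (u1 x) + lam * V x - m x powr \<alpha> - \<epsilon> * (m x - m2 x) = 0"
    and E2: "\<And>x. m x - m2 x - (deriv (deriv H) (u1 x) * u2 x * m x + deriv H (u1 x) * m1 x) - 1
                 + \<epsilon> * (u x - u2 x) = 0"
begin

lemma cu: "continuous_on UNIV u" by (rule deriv_cont[OF du])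
lemma cu1: "continuous_on UNIV u1" by (rule deriv_cont[OF du1])
lemma cm: "continuous_on UNIV m" by (rule deriv_cont[OF dm])
lemma cm1: "continuous_on UNIV m1" by (rule deriv_cont[OF dm1])
lemma pu1: "periodic1 u1" by (rule periodic1_deriv[OF pu du])
lemma pm1: "periodic1 m1" by (rule periodic1_deriv[OF pm dm])
lemma pu2: "periodic1 u2" by (rule periodic1_deriv[OF pu1 du1])
lemma pm2: "periodic1 m2" by (rule periodic1_deriv[OF pm1 dm1])

definition "Sf x = (u x)\<^sup>2 + (u1 x)\<^sup>2 + (m x)\<^sup>2 + (m1 x)\<^sup>2"
lemma cSf: "continuous_on UNIV Sf" unfolding Sf_def using cu cu1 cm cm1 by (intro continuous_intros)

lemma energy: "integral {0..1} Sf \<le> cS0"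
proof -
  define W where "W x = u1 x * m x - u x * m1 x - H1 (u1 x) * m x * u x - \<epsilon> * u x * u1 x - \<epsilon> * m x * m1 x" for x
  define W' where "W' x = u2 x * m x + u1 x * m1 x - (u1 x * m1 x + u x * m2 x)
     - (H2 (u1 x) * u2 x * m x * u x + H1 (u1 x) * (m1 x * u x + m x * u1 x))
       - \<epsilon> * (u1 x * u1 x + u x * u2 x) - \<epsilon> * (m1 x * m1 x + m x * m2 x)" for x
  define Q where "Q x = m1 x + H1 (u1 x) * m x + \<epsilon> * u1 x" for x
  define Q' where "Q' x = m2 x + (H2 (u1 x) * u2 x * m x + H1 (u1 x) * m1 x) + \<epsilon> * u2 x" for x
  have dW: "(W has_real_derivative W' x) (at x)" for x
    unfolding W_def[abs_def] W'_def
    by (rule derivative_eq_intros du du1 dm dm1 refl | simp add: algebra_simps)+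
  have dQ: "(Q has_real_derivative Q' x) (at x)" for x
    unfolding Q_def[abs_def] Q'_def
    by (rule derivative_eq_intros du du1 dm dm1 refl | simp add: algebra_simps)+
  have pW: "periodic1 W" using pu pm pu1 pm1 unfolding periodic1_def W_def by simp
  have pQ: "periodic1 Q" using pu pm pu1 pm1 unfolding periodic1_def Q_def by simp
  have iW: "(W' has_integral 0) {0..1}"
  proof -
    have "(W' has_integral (W 1 - W 0)) {0..1}" by (rule ftc_real[OF dW]) simp
    moreover have "W (0 + 1) = W 0" using pW unfolding periodic1_def by blast
    ultimately show ?thesis by simp
  qed
  have iQ: "(Q' has_integral 0) {0..1}"
  proof -
    have "(Q' has_integral (Q 1 - Q 0)) {0..1}" by (rule ftc_real[OF dQ]) simp
    moreover have "Q (0 + 1) = Q 0" using pQ unfolding periodic1_def by blast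
    ultimately show ?thesis by simp
  qed
  have pt: "\<epsilon> / 2 * Sf x \<le> - W' x + cK * Q' x + (cK + cc0)" for x
  proof -
    have id: "(u1 x * H1 (u1 x) - H (u1 x)) * m x + m x powr \<alpha> * m x + \<epsilon> * Sf x = u x + lam * V x * m x - W' x"
      unfolding Sf_def W'_def by (rule energy_alg[OF E1[of x] E2[of x]])
    have "-a1 \<le> u1 x * H1 (u1 x) - H (u1 x)" using A2l[of "u1 x"] by simp
    then have a: "(- a1) * m x \<le> (u1 x * H1 (u1 x) - H (u1 x)) * m x"
      by (rule mult_right_mono) (use mpos[of x] in simp)
    have b: "0 \<le> m x powr \<alpha> * m x" using mpos[of x] by simp
    have c: "lam * V x * m x \<le> KV * m x"
    proof -
      have "lam * V x \<le> \<bar>lam * V x\<bar>" by simp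
      also have "\<dots> = lam * \<bar>V x\<bar>" using lam by (simp add: abs_mult)
      also have "\<dots> \<le> 1 * KV" using lam KVb[of x] by (intro mult_mono) auto
      finally show ?thesis using mpos[of x] by (intro mult_right_mono) auto
    qed
    have q: "Q' x = m x - 1 + \<epsilon> * u x" using E2[of x] unfolding Q'_def by (simp add: algebra_simps)
    have qm: "cK * m x = cK * Q' x + cK - cK * \<epsilon> * u x" unfolding q by (simp add: algebra_simps)
    have am: "(1 - cK * \<epsilon>) * u x \<le> \<epsilon> / 2 * (u x)\<^sup>2 + cc0"
    proof -
      have "(1 - cK * \<epsilon>) * u x \<le> \<epsilon> / 2 * (u x)\<^sup>2 + (1 - cK * \<epsilon>)\<^sup>2 / (2 * \<epsilon>)"
        by (rule amgm[OF eps(1)])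
      moreover have "(1 - cK * \<epsilon>)\<^sup>2 \<le> (1 + cK)\<^sup>2"
      proof -
        have "0 \<le> cK * \<epsilon>" using cK_nn eps by simp
        moreover have "cK * \<epsilon> \<le> cK" using cK_nn eps mult_left_le[of \<epsilon> cK] by simp
        ultimately have "\<bar>1 - cK * \<epsilon>\<bar> \<le> 1 + cK" by (simp add: abs_le_iff)
        then have "\<bar>1 - cK * \<epsilon>\<bar>\<^sup>2 \<le> (1 + cK)\<^sup>2" by (intro power_mono) auto
        then show ?thesis by simp
      qed
      then have "(1 - cK * \<epsilon>)\<^sup>2 / (2 * \<epsilon>) \<le> cc0" unfolding cc0_def using eps
        by (intro divide_right_mono) auto
      ultimately show ?thesis by linarith
    qed
    have s: "\<epsilon> / 2 * (u x)\<^sup>2 \<le> \<epsilon> / 2 * Sf x" unfolding Sf_def using eps by (intro mult_left_mono) auto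
    have e1: "(1 - cK * \<epsilon>) * u x = u x - cK * \<epsilon> * u x" by (simp add: algebra_simps)
    have e2: "\<epsilon> * Sf x = \<epsilon> / 2 * Sf x + \<epsilon> / 2 * Sf x" by simp
    have k: "a1 * m x + KV * m x = cK * m x" unfolding cK_def by (simp add: algebra_simps)
    have neg: "(- a1) * m x = - (a1 * m x)" by simp
    show ?thesis using id a b c qm am s e1 e2 k neg by linarith
  qed
  have cS2: "continuous_on UNIV (\<lambda>x. \<epsilon> / 2 * Sf x)" using cSf by (intro continuous_intros)
  have i1: "((\<lambda>x. \<epsilon> / 2 * Sf x) has_integral (\<epsilon> / 2 * integral {0..1} Sf)) {0..1}"
    by (intro has_integral_mult_right integrable_integral cint[OF cSf])
  have i2: "((\<lambda>x. - W' x + cK * Q' x + (cK + cc0)) has_integral (- 0 + cK * 0 + (cK + cc0))) {0..1}"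
  proof -
    have "((\<lambda>x. cK + cc0) has_integral (cK + cc0)) {0..1::real}"
      using has_integral_const_real[of "cK + cc0" 0 "1::real"] by simp
    then show ?thesis by (rule has_integral_add[OF has_integral_add[OF has_integral_neg[OF iW] has_integral_mult_right[OF iQ]]])
  qed
  have "\<epsilon> / 2 * integral {0..1} Sf \<le> cK + cc0" using has_integral_le[OF i1 i2 pt] by simp
  then show ?thesis unfolding cS0_def using eps by (simp add: field_simps)
qed


lemma eps_abs: "\<bar>\<epsilon> * a\<bar> \<le> \<bar>a\<bar>" using eps by (simp add: abs_mult mult_left_le_one_le)

lemma sq_le_Sf: "(u x)\<^sup>2 \<le> Sf x" "(u1 x)\<^sup>2 \<le> Sf x" "(m x)\<^sup>2 \<le> Sf x" "(m1 x)\<^sup>2 \<le> Sf x"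
  unfolding Sf_def by (simp_all add: add_increasing add_increasing2)

lemma u_bd: "\<bar>u x\<bar> \<le> cM0"
proof (rule periodic1_bound[OF pu])
  fix t :: real assume t: "t \<in> {0..1}"
  show "\<bar>u t\<bar> \<le> cM0" unfolding cM0_def
  proof (rule sup_bound2[OF du cu1 cSf _ energy _ t])
    fix y
    show "\<bar>u y\<bar> + \<bar>u1 y\<bar> \<le> 1 + 1 / 2 * Sf y"
      using absq[of "u y"] absq[of "u1 y"] zero_le_power2[of "m y"] zero_le_power2[of "m1 y"] unfolding Sf_def ring_distribs by linarith
  qed simp
qed

lemma m_bd: "\<bar>m x\<bar> \<le> cM0"
proof (rule periodic1_bound[OF pm])
  fix t :: real assume t: "t \<in> {0..1}"
  show "\<bar>m t\<bar> \<le> cM0" unfolding cM0_def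
  proof (rule sup_bound2[OF dm cm1 cSf _ energy _ t])
    fix y
    show "\<bar>m y\<bar> + \<bar>m1 y\<bar> \<le> 1 + 1 / 2 * Sf y"
      using absq[of "m y"] absq[of "m1 y"] zero_le_power2[of "u y"] zero_le_power2[of "u1 y"] unfolding Sf_def ring_distribs by linarith
  qed simp
qed

lemma mpow_bd: "m x powr \<alpha> \<le> cM0 powr \<alpha>"
  using m_bd[of x] mpos[of x] alpha by (intro powr_mono2) auto

definition "P x = u1 x - \<epsilon> * m1 x"
definition "P' x = u2 x - \<epsilon> * m2 x"
definition "Q x = m1 x + H1 (u1 x) * m x + \<epsilon> * u1 x"
definition "Q' x = m2 x + (H2 (u1 x) * u2 x * m x + H1 (u1 x) * m1 x) + \<epsilon> * u2 x"

lemma dP: "(P has_real_derivative P' x) (at x)"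
  unfolding P_def[abs_def] P'_def by (rule derivative_eq_intros du1 dm1 refl | simp)+
lemma dQ: "(Q has_real_derivative Q' x) (at x)"
  unfolding Q_def[abs_def] Q'_def by (rule derivative_eq_intros du du1 dm dm1 refl | simp add: algebra_simps)+
lemma cP': "continuous_on UNIV P'" unfolding P'_def[abs_def] using cu2 cm2 by (intro continuous_intros)
lemma cQ': "continuous_on UNIV Q'" unfolding Q'_def[abs_def] using cu1 cu2 cm cm1 cm2 by (intro continuous_intros)
lemma pP: "periodic1 P" using pu1 pm1 unfolding periodic1_def P_def by simp
lemma pQ: "periodic1 Q" using pu1 pm1 pm unfolding periodic1_def Q_def by simp

lemma P'_eq: "P' x = u x + H (u1 x) + lam * V x - m x powr \<alpha> - \<epsilon> * m x"
  using E1[of x] unfolding P'_def by (simp add: algebra_simps)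
lemma Q'_eq: "Q' x = m x - 1 + \<epsilon> * u x"
  using E2[of x] unfolding Q'_def by (simp add: algebra_simps)

lemma lamV: "\<bar>lam * V x\<bar> \<le> KV"
proof -
  have "\<bar>lam * V x\<bar> = lam * \<bar>V x\<bar>" using lam by (simp add: abs_mult)
  also have "\<dots> \<le> 1 * KV" using lam KVb[of x] by (intro mult_mono) auto
  finally show ?thesis by simp
qed

lemma P_bd: "\<bar>P x\<bar> \<le> cP0"
proof (rule periodic1_bound[OF pP])
  fix t :: real assume t: "t \<in> {0..1}"
  show "\<bar>P t\<bar> \<le> cP0" unfolding cP0_def
  proof (rule sup_bound2[OF dP cP' cSf _ energy _ t])
    fix y
    have h1: "\<bar>P y\<bar> \<le> 1 + 1/2 * ((u1 y)\<^sup>2 + (m1 y)\<^sup>2)"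
    proof -
      have "\<bar>\<epsilon> * m1 y\<bar> \<le> \<bar>m1 y\<bar>" using eps by (simp add: abs_mult mult_left_le_one_le)
      then show ?thesis unfolding P_def ring_distribs using absq[of "u1 y"] absq[of "m1 y"] abs_triangle_ineq4[of "u1 y" "\<epsilon> * m1 y"] by linarith
    qed
    have h2: "\<bar>P' y\<bar> \<le> 2 * cM0 + b1 + b3 + KV + cM0 powr \<alpha> + b3 * (u1 y)\<^sup>2"
    proof -
      have "\<bar>\<epsilon> * m y\<bar> \<le> cM0" using eps_abs[of "m y"] m_bd[of y] by linarith
      moreover have "\<bar>m y powr \<alpha>\<bar> \<le> cM0 powr \<alpha>" using mpow_bd[of y] by simp
      moreover have "\<bar>H (u1 y)\<bar> \<le> b1 + b3 + b3 * (u1 y)\<^sup>2" using H_abs[of "u1 y"] by (simp add: algebra_simps)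
      ultimately show ?thesis unfolding P'_eq using u_bd[of y] lamV[of y] abs5[of "u y" "H (u1 y)" "lam * V y" "m y powr \<alpha>" "\<epsilon> * m y"] by linarith
    qed
    have h3: "b3 * (u1 y)\<^sup>2 \<le> b3 * Sf y" using b13 sq_le_Sf by (intro mult_left_mono) auto
    have h4: "(u1 y)\<^sup>2 + (m1 y)\<^sup>2 \<le> Sf y" unfolding Sf_def by simp
    show "\<bar>P y\<bar> + \<bar>P' y\<bar> \<le> 1 + 2 * cM0 + b1 + b3 + KV + cM0 powr \<alpha> + (1 / 2 + b3) * Sf y"
      using h1 h2 h3 h4 by (simp add: algebra_simps)
  qed (use b13 in simp)
qed

lemma Q_bd: "\<bar>Q x\<bar> \<le> cQ0"
proof (rule periodic1_bound[OF pQ])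
  fix t :: real assume t: "t \<in> {0..1}"
  show "\<bar>Q t\<bar> \<le> cQ0" unfolding cQ0_def
  proof (rule sup_bound2[OF dQ cQ' cSf _ energy _ t])
    fix y
    have hm: "\<bar>H1 (u1 y) * m y\<bar> \<le> Cb * (2 + (u1 y)\<^sup>2) * cM0"
      unfolding abs_mult using H1_abs[of "u1 y"] m_bd[of y] Cb by (intro mult_mono) auto
    have "\<bar>\<epsilon> * u1 y\<bar> \<le> \<bar>u1 y\<bar>" using eps by (simp add: abs_mult mult_left_le_one_le)
    then have h1: "\<bar>Q y\<bar> \<le> 1 + 1/2 * ((u1 y)\<^sup>2 + (m1 y)\<^sup>2) + Cb * (2 + (u1 y)\<^sup>2) * cM0"
      unfolding Q_def ring_distribs using absq[of "u1 y"] absq[of "m1 y"] hm[unfolded ring_distribs] abs3p[of "m1 y" "H1 (u1 y) * m y" "\<epsilon> * u1 y"] by linarith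
    have "\<bar>\<epsilon> * u y\<bar> \<le> cM0" using eps_abs[of "u y"] u_bd[of y] by linarith
    then have h2: "\<bar>Q' y\<bar> \<le> 2 * cM0 + 1" unfolding Q'_eq using m_bd[of y] abs_q[of "m y" "\<epsilon> * u y"] by linarith
    have h3: "Cb * cM0 * (u1 y)\<^sup>2 \<le> Cb * cM0 * Sf y" using Cb cM0_pos sq_le_Sf by (intro mult_left_mono) auto
    have h4: "(u1 y)\<^sup>2 + (m1 y)\<^sup>2 \<le> Sf y" unfolding Sf_def by simp
    show "\<bar>Q y\<bar> + \<bar>Q' y\<bar> \<le> 2 + 2 * Cb * cM0 + 2 * cM0 + (1 / 2 + Cb * cM0) * Sf y"
      using h1 h2 h3 h4 by (simp add: algebra_simps)
  qed (use Cb cM0_pos in simp)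
qed

lemma u1_bd: "\<bar>u1 x\<bar> \<le> cU1"
proof -
  define L where "L = (1 + \<epsilon>\<^sup>2) * u1 x + \<epsilon> * (H1 (u1 x) - H1 0) * m x"
  have L_eq: "L = \<epsilon> * Q x + P x - \<epsilon> * H1 0 * m x" unfolding L_def Q_def P_def by (simp add: algebra_simps power2_eq_square)
  have "\<bar>\<epsilon> * Q x\<bar> \<le> cQ0" using eps_abs[of "Q x"] Q_bd[of x] by linarith
  moreover have "\<bar>\<epsilon> * H1 0 * m x\<bar> \<le> \<bar>H1 0\<bar> * cM0"
  proof -
    have "\<bar>\<epsilon> * H1 0 * m x\<bar> = \<epsilon> * (\<bar>H1 0\<bar> * \<bar>m x\<bar>)" using eps by (simp add: abs_mult)
    also have "\<dots> \<le> 1 * (\<bar>H1 0\<bar> * cM0)" using eps m_bd[of x] by (intro mult_mono mult_left_mono) auto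
    finally show ?thesis by simp
  qed
  ultimately have Lb: "\<bar>L\<bar> \<le> cU1" unfolding L_eq cU1_def using P_bd[of x] abs3m[of "\<epsilon> * Q x" "P x" "\<epsilon> * H1 0 * m x"] by linarith
  have "\<bar>u1 x\<bar> \<le> \<bar>L\<bar>"
  proof (cases "u1 x \<ge> 0")
    case True
    then have "0 \<le> H1 (u1 x) - H1 0" using H1_mono by simp
    then have "0 \<le> \<epsilon> * (H1 (u1 x) - H1 0) * m x" using eps mpos[of x] by simp
    moreover have "u1 x \<le> (1 + \<epsilon>\<^sup>2) * u1 x" using True by (simp add: algebra_simps)
    ultimately show ?thesis unfolding L_def using True by linarith
  next
    case False
    then have "H1 (u1 x) - H1 0 \<le> 0" using H1_mono by simp
    then have "\<epsilon> * (H1 (u1 x) - H1 0) * m x \<le> 0" using eps mpos[of x]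
      by (simp add: mult_nonneg_nonpos mult_nonpos_nonneg)
    moreover have "u1 x * \<epsilon>\<^sup>2 \<le> 0" using False by (intro mult_nonpos_nonneg) auto
    then have "(1 + \<epsilon>\<^sup>2) * u1 x \<le> u1 x" by (simp add: algebra_simps)
    ultimately show ?thesis unfolding L_def using False by linarith
  qed
  with Lb show ?thesis by linarith
qed

lemma m1_bd: "\<bar>m1 x\<bar> \<le> cM1"
proof -
  have "\<epsilon> * m1 x = u1 x - P x" unfolding P_def by simp
  then have "\<epsilon> * \<bar>m1 x\<bar> \<le> cU1 + cP0" using u1_bd[of x] P_bd[of x] eps abs_triangle_ineq4[of "u1 x" "P x"] by (simp add: abs_mult[symmetric])
  then show ?thesis unfolding cM1_def using eps by (simp add: field_simps)
qed

definition "f1 x = u x + H (u1 x) + lam * V x - m x powr \<alpha> - \<epsilon> * m x"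
definition "gg x = m x - 1 + \<epsilon> * u x - H1 (u1 x) * m1 x"
definition "DD x = 1 + \<epsilon>\<^sup>2 + \<epsilon> * H2 (u1 x) * m x"

lemma DD_ge: "DD x \<ge> 1" unfolding DD_def using eps H2_nonneg[of "u1 x"] mpos[of x] by simp

lemma u2_eq: "u2 x * DD x = f1 x + \<epsilon> * gg x"
  using E1[of x] E2[of x] unfolding DD_def f1_def gg_def by (simp add: algebra_simps power2_eq_square)
lemma m2_eq: "m2 x = gg x - (H2 (u1 x) * m x + \<epsilon>) * u2 x"
  using E2[of x] unfolding gg_def by (simp add: algebra_simps)

lemma f1_bd: "\<bar>f1 x\<bar> \<le> cF1"
proof -
  have "\<bar>u1 x\<bar>\<^sup>2 \<le> cU1\<^sup>2" using u1_bd[of x] by (intro power_mono) auto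
  then have "b3 * (u1 x)\<^sup>2 \<le> b3 * cU1\<^sup>2" using b13 by (intro mult_left_mono) auto
  then have "\<bar>H (u1 x)\<bar> \<le> b1 + b3 * (1 + cU1\<^sup>2)" using H_abs[of "u1 x"]
    by (simp add: algebra_simps)
  moreover have "\<bar>\<epsilon> * m x\<bar> \<le> cM0" using eps_abs[of "m x"] m_bd[of x] by linarith
  moreover have "\<bar>m x powr \<alpha>\<bar> \<le> cM0 powr \<alpha>" using mpow_bd[of x] by simp
  ultimately show ?thesis unfolding f1_def cF1_def using u_bd[of x] lamV[of x] abs5[of "u x" "H (u1 x)" "lam * V x" "m x powr \<alpha>" "\<epsilon> * m x"] by linarith
qed

lemma gg_bd: "\<bar>gg x\<bar> \<le> cG"
proof -
  have "\<bar>u1 x\<bar>\<^sup>2 \<le> cU1\<^sup>2" using u1_bd[of x] by (intro power_mono) auto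
  then have "Cb * (u1 x)\<^sup>2 \<le> Cb * cU1\<^sup>2" using Cb by (intro mult_left_mono) auto
  then have "\<bar>H1 (u1 x)\<bar> \<le> Cb * (2 + cU1\<^sup>2)" using H1_abs[of "u1 x"]
    by (simp add: algebra_simps)
  then have "\<bar>H1 (u1 x) * m1 x\<bar> \<le> Cb * (2 + cU1\<^sup>2) * cM1" unfolding abs_mult
    using m1_bd[of x] by (intro mult_mono) auto
  moreover have "\<bar>\<epsilon> * u x\<bar> \<le> cM0" using eps_abs[of "u x"] u_bd[of x] by linarith
  ultimately show ?thesis unfolding gg_def cG_def using m_bd[of x] abs_g[of "m x" "\<epsilon> * u x" "H1 (u1 x) * m1 x"] by linarith
qed

lemma u2_bd: "\<bar>u2 x\<bar> \<le> cU2"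
proof -
  have "\<bar>u2 x\<bar> \<le> \<bar>u2 x\<bar> * DD x" using DD_ge[of x] by (simp add: mult_le_cancel_left1)
  also have "\<dots> = \<bar>u2 x * DD x\<bar>" using DD_ge[of x] by (simp add: abs_mult)
  also have "\<dots> = \<bar>f1 x + \<epsilon> * gg x\<bar>" using u2_eq[of x] by simp
  also have "\<dots> \<le> cF1 + cG"
  proof -
    have "\<bar>\<epsilon> * gg x\<bar> \<le> cG" using eps_abs[of "gg x"] gg_bd[of x] by linarith
    then show ?thesis using f1_bd[of x] abs_triangle_ineq[of "f1 x" "\<epsilon> * gg x"] by linarith
  qed
  finally show ?thesis unfolding cU2_def .
qed

lemma m2_bd:
  assumes h: "\<And>p. \<bar>p\<bar> \<le> cU1 \<Longrightarrow> H2 p \<le> h"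
  shows "\<bar>m2 x\<bar> \<le> cG + (h * cM0 + 1) * cU2"
proof -
  have hx: "0 \<le> H2 (u1 x)" "H2 (u1 x) \<le> h" using H2_nonneg h u1_bd by auto
  have "\<bar>(H2 (u1 x) * m x + \<epsilon>) * u2 x\<bar> \<le> (h * cM0 + 1) * cU2"
    unfolding abs_mult
  proof (rule mult_mono)
    have "\<bar>H2 (u1 x) * m x + \<epsilon>\<bar> = H2 (u1 x) * m x + \<epsilon>" using hx mpos[of x] eps by simp
    also have "\<dots> \<le> h * cM0 + 1" using hx m_bd[of x] mpos[of x] eps by (intro add_mono mult_mono) auto
    finally show "\<bar>H2 (u1 x) * m x + \<epsilon>\<bar> \<le> h * cM0 + 1" .
  qed (use u2_bd hx cM0_pos in auto)
  then show ?thesis unfolding m2_eq using gg_bd[of x] abs_triangle_ineq4[of "gg x" "(H2 (u1 x) * m x + \<epsilon>) * u2 x"] by linarith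
qed

end


context sol begin
lemma u2_G: "u2 x = (f1 x + \<epsilon> * gg x) / DD x"
  using u2_eq[of x] DD_ge[of x] by (simp add: field_simps)
end

definition C1 :: "(real \<Rightarrow> real) \<Rightarrow> bool" where
  "C1 f \<longleftrightarrow> (\<exists>f'. (\<forall>x. (f has_real_derivative f' x) (at x)) \<and> continuous_on UNIV f')"

lemma C1I: "(\<And>x. (f has_real_derivative f' x) (at x)) \<Longrightarrow> continuous_on UNIV f' \<Longrightarrow> C1 f"
  unfolding C1_def by blast

lemma C1_cont: "C1 f \<Longrightarrow> continuous_on UNIV f"
  unfolding C1_def using deriv_cont by blast

lemma C1_const: "C1 (\<lambda>x. c)"
  by (rule C1I[of _ "\<lambda>x. 0"]) (auto intro!: derivative_eq_intros)

lemma C1_add: "C1 f \<Longrightarrow> C1 g \<Longrightarrow> C1 (\<lambda>x. f x + g x)"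
proof -
  assume "C1 f" "C1 g"
  then obtain f' g' where f: "\<And>x. (f has_real_derivative f' x) (at x)" "continuous_on UNIV f'"
    and g: "\<And>x. (g has_real_derivative g' x) (at x)" "continuous_on UNIV g'" unfolding C1_def by blast
  show ?thesis by (rule C1I[of _ "\<lambda>x. f' x + g' x"]) (use f g in \<open>auto intro!: derivative_eq_intros continuous_intros\<close>)
qed

lemma C1_diff: "C1 f \<Longrightarrow> C1 g \<Longrightarrow> C1 (\<lambda>x. f x - g x)"
proof -
  assume "C1 f" "C1 g"
  then obtain f' g' where f: "\<And>x. (f has_real_derivative f' x) (at x)" "continuous_on UNIV f'"
    and g: "\<And>x. (g has_real_derivative g' x) (at x)" "continuous_on UNIV g'" unfolding C1_def by blast
  show ?thesis by (rule C1I[of _ "\<lambda>x. f' x - g' x"]) (use f g in \<open>auto intro!: derivative_eq_intros continuous_intros\<close>)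
qed

lemma C1_mult: "C1 f \<Longrightarrow> C1 g \<Longrightarrow> C1 (\<lambda>x. f x * g x)"
proof -
  assume a: "C1 f" "C1 g"
  then obtain f' g' where f: "\<And>x. (f has_real_derivative f' x) (at x)" "continuous_on UNIV f'"
    and g: "\<And>x. (g has_real_derivative g' x) (at x)" "continuous_on UNIV g'" unfolding C1_def by blast
  have cf: "continuous_on UNIV f" and cg: "continuous_on UNIV g" using a C1_cont by auto
  show ?thesis
    by (rule C1I[of _ "\<lambda>x. f' x * g x + f x * g' x"])
      (use f g cf cg in \<open>auto intro!: derivative_eq_intros continuous_intros\<close>)
qed

lemma C1_div: "C1 f \<Longrightarrow> C1 g \<Longrightarrow> (\<And>x. g x \<noteq> 0) \<Longrightarrow> C1 (\<lambda>x. f x / g x)"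
proof -
  assume a: "C1 f" "C1 g" and nz: "\<And>x. g x \<noteq> 0"
  then obtain f' g' where f: "\<And>x. (f has_real_derivative f' x) (at x)" "continuous_on UNIV f'"
    and g: "\<And>x. (g has_real_derivative g' x) (at x)" "continuous_on UNIV g'" unfolding C1_def by blast
  have cf: "continuous_on UNIV f" and cg: "continuous_on UNIV g" using a C1_cont by auto
  show ?thesis
    by (rule C1I[of _ "\<lambda>x. (f' x * g x - f x * g' x) / (g x * g x)"])
      (use f g cf cg nz in \<open>auto intro!: derivative_eq_intros continuous_intros\<close>)
qed

lemma C1_comp: "C1 h \<Longrightarrow> C1 f \<Longrightarrow> C1 (\<lambda>x. h (f x))"
proof -
  assume a: "C1 h" "C1 f"
  then obtain h' f' where h: "\<And>x. (h has_real_derivative h' x) (at x)" "continuous_on UNIV h'"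
    and f: "\<And>x. (f has_real_derivative f' x) (at x)" "continuous_on UNIV f'" unfolding C1_def by blast
  have cf: "continuous_on UNIV f" using a C1_cont by auto
  have d: "((\<lambda>x. h (f x)) has_real_derivative h' (f x) * f' x) (at x)" for x
    by (rule DERIV_chain2[OF h(1) f(1)])
  have c: "continuous_on UNIV (\<lambda>x. h' (f x) * f' x)"
    by (intro continuous_intros continuous_on_compose2[OF h(2) cf] f(2)) auto
  show ?thesis by (rule C1I[OF d c])
qed

lemma C1_powr: "C1 f \<Longrightarrow> (\<And>x. f x > 0) \<Longrightarrow> C1 (\<lambda>x. f x powr a)"
proof -
  assume a: "C1 f" and pos: "\<And>x. f x > 0"
  then obtain f' where f: "\<And>x. (f has_real_derivative f' x) (at x)" "continuous_on UNIV f'"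
    unfolding C1_def by blast
  have cf: "continuous_on UNIV f" using a C1_cont by auto
  have d: "((\<lambda>x. f x powr a) has_real_derivative (f x powr a) * (0 * ln (f x) + f' x * a / f x)) (at x)" for x
    by (rule DERIV_powr[OF f(1) pos]) (rule DERIV_const)
  have nz: "\<forall>x\<in>UNIV. f x \<noteq> 0" using pos by (metis less_irrefl)
  have c: "continuous_on UNIV (\<lambda>x. (f x powr a) * (0 * ln (f x) + f' x * a / f x))"
    using cf f(2) nz pos by (intro continuous_intros) auto
  show ?thesis by (rule C1I[OF d c])
qed

context mfg begin

lemma C1_H: "C1 H" by (rule C1I[OF dH cH1])
lemma C1_H1: "C1 H1" by (rule C1I[OF dH1 cH2])
lemma C1_H2: "C1 H2" by (rule C1I[OF dH2 cH3])
lemma C1_V: "C1 V" by (rule C1I[OF dV cV1])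

definition "Gf lam x a b c = a + H b + lam * V x - c powr \<alpha> - \<epsilon> * c"
definition "Gg a b c d = c - 1 + \<epsilon> * a - H1 b * d"
definition "Gd b c = 1 + \<epsilon>\<^sup>2 + \<epsilon> * H2 b * c"
definition "Gu lam x a b c d = (Gf lam x a b c + \<epsilon> * Gg a b c d) / Gd b c"
definition "Gm lam x a b c d = Gg a b c d - (H2 b * c + \<epsilon>) * Gu lam x a b c d"

lemma Gd_ge: "c > 0 \<Longrightarrow> Gd b c \<ge> 1"
  unfolding Gd_def using eps H2_nonneg[of b] by simp

lemma G_eqs:
  assumes c: "c > 0"
  shows "a - Gu lam x a b c d + H b + lam * V x - c powr \<alpha> - \<epsilon> * (c - Gm lam x a b c d) = 0"
    "c - Gm lam x a b c d - (H2 b * Gu lam x a b c d * c + H1 b * d) - 1 + \<epsilon> * (a - Gu lam x a b c d) = 0"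
proof -
  have D: "Gd b c \<noteq> 0" using Gd_ge[OF c, of b] by simp
  have e: "Gu lam x a b c d * Gd b c = Gf lam x a b c + \<epsilon> * Gg a b c d" unfolding Gu_def using D by simp
  show "a - Gu lam x a b c d + H b + lam * V x - c powr \<alpha> - \<epsilon> * (c - Gm lam x a b c d) = 0"
    using e unfolding Gm_def Gd_def Gf_def Gg_def by (simp add: algebra_simps power2_eq_square)
  show "c - Gm lam x a b c d - (H2 b * Gu lam x a b c d * c + H1 b * d) - 1 + \<epsilon> * (a - Gu lam x a b c d) = 0"
    unfolding Gm_def Gg_def by (simp add: algebra_simps)
qed

lemma sol_G:
  assumes "sol H V \<alpha> \<gamma> \<epsilon> a1 b1 b3 Cb KV lam u u1 u2 m m1 m2"
  shows "u2 x = Gu lam x (u x) (u1 x) (m x) (m1 x)" "m2 x = Gm lam x (u x) (u1 x) (m x) (m1 x)"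
proof -
  interpret s: sol H V \<alpha> \<gamma> \<epsilon> a1 b1 b3 Cb KV lam u u1 u2 m m1 m2 by (rule assms)
  show 1: "u2 x = Gu lam x (u x) (u1 x) (m x) (m1 x)"
    unfolding s.u2_G Gu_def s.f1_def Gf_def s.gg_def Gg_def s.DD_def Gd_def by simp
  show "m2 x = Gm lam x (u x) (u1 x) (m x) (m1 x)"
    unfolding s.m2_eq Gm_def 1[symmetric] s.gg_def Gg_def by simp
qed

lemma sol_of:
  assumes lam: "lam \<in> {0..1}" and u: "C2_half u" and m: "C2_half m" and mp: "\<And>x. m x > 0"
    and F: "F_zero H V \<alpha> \<epsilon> u m lam"
  shows "sol H V \<alpha> \<gamma> \<epsilon> a1 b1 b3 Cb KV lam u (deriv u) (deriv (deriv u)) m (deriv m) (deriv (deriv m))"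
proof -
  have du: "(u has_real_derivative deriv u x) (at x)" for x
    using Ck_deriv[of 2 u 0 x] u unfolding C2_half_def by simp
  have du1: "(deriv u has_real_derivative deriv (deriv u) x) (at x)" for x
    using Ck_deriv[of 2 u 1 x] u unfolding C2_half_def by simp
  have cu2: "continuous_on UNIV (deriv (deriv u))"
    using u unfolding C2_half_def Ck_def by (simp add: numeral_2_eq_2)
  have dm: "(m has_real_derivative deriv m x) (at x)" for x
    using Ck_deriv[of 2 m 0 x] m unfolding C2_half_def by simp
  have dm1: "(deriv m has_real_derivative deriv (deriv m) x) (at x)" for x
    using Ck_deriv[of 2 m 1 x] m unfolding C2_half_def by simp
  have cm2: "continuous_on UNIV (deriv (deriv m))"
    using m unfolding C2_half_def Ck_def by (simp add: numeral_2_eq_2)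
  have dd: "deriv (\<lambda>y. H1 (deriv u y) * m y) x = H2 (deriv u x) * deriv (deriv u) x * m x + H1 (deriv u x) * deriv m x" for x
  proof (rule DERIV_imp_deriv)
    show "((\<lambda>y. H1 (deriv u y) * m y) has_real_derivative H2 (deriv u x) * deriv (deriv u) x * m x + H1 (deriv u x) * deriv m x) (at x)"
      by (rule derivative_eq_intros du1 dm refl | simp)+
  qed
  show ?thesis
  proof (unfold_locales)
    show "0 \<le> lam" "lam \<le> 1" using lam by auto
    show "periodic1 u" "periodic1 m" using u m unfolding C2_half_def by auto
    show "\<And>x. (u has_real_derivative deriv u x) (at x)" by (rule du)
    show "\<And>x. (deriv u has_real_derivative deriv (deriv u) x) (at x)" by (rule du1)
    show "continuous_on UNIV (deriv (deriv u))" by (rule cu2)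
    show "\<And>x. (m has_real_derivative deriv m x) (at x)" by (rule dm)
    show "\<And>x. (deriv m has_real_derivative deriv (deriv m) x) (at x)" by (rule dm1)
    show "continuous_on UNIV (deriv (deriv m))" by (rule cm2)
    show "\<And>x. m x > 0" by (rule mp)
    fix x
    have f1: "F1 H V \<alpha> \<epsilon> u m lam x = 0" and f2: "F2 H \<epsilon> u m x = 0" using F unfolding F_zero_def by auto
    show "u x - deriv (deriv u) x + H (deriv u x) + lam * V x - m x powr \<alpha> - \<epsilon> * (m x - deriv (deriv m) x) = 0"
      using f1 unfolding F1_def by (simp add: numeral_2_eq_2)
    show "m x - deriv (deriv m) x - (H2 (deriv u x) * deriv (deriv u) x * m x + H1 (deriv u x) * deriv m x) - 1
       + \<epsilon> * (u x - deriv (deriv u) x) = 0"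
      using f2 unfolding F2_def dd by (simp add: numeral_2_eq_2)
  qed
qed

end


lemma deriv_lip:
  fixes F f :: "real \<Rightarrow> real"
  assumes d: "\<And>x. (F has_real_derivative f x) (at x)" and b: "\<And>x. \<bar>f x\<bar> \<le> B"
  shows "\<bar>F x - F y\<bar> \<le> B * \<bar>x - y\<bar>"
proof (rule int_lip[OF _ b])
  fix a b :: real assume ab: "a \<le> b"
  show "f integrable_on {a..b} \<and> F b - F a = integral {a..b} f"
    using ftc_real[OF d ab] by (auto simp: integral_unique)
qed

lemma limit_bound:
  fixes X :: "nat \<Rightarrow> real"
  assumes "X \<longlonglongrightarrow> x" "\<And>n. \<bar>X n\<bar> \<le> B"
  shows "\<bar>x\<bar> \<le> B"
proof -
  have "(\<lambda>n. \<bar>X n\<bar>) \<longlonglongrightarrow> \<bar>x\<bar>" by (intro tendsto_intros assms(1))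
  then show ?thesis by (rule LIMSEQ_le_const2) (use assms(2) in auto)
qed

lemma limit_periodic:
  fixes f :: "nat \<Rightarrow> real \<Rightarrow> real"
  assumes "\<And>n. periodic1 (f n)" "\<And>x. (\<lambda>n. f n x) \<longlonglongrightarrow> g x"
  shows "periodic1 g"
  unfolding periodic1_def
proof
  fix x
  have "(\<lambda>n. f n (x + 1)) \<longlonglongrightarrow> g (x + 1)" by (rule assms(2))
  moreover have "(\<lambda>n. f n (x + 1)) = (\<lambda>n. f n x)" using assms(1) unfolding periodic1_def by simp
  ultimately have "(\<lambda>n. f n x) \<longlonglongrightarrow> g (x + 1)" by simp
  then show "g (x + 1) = g x" using assms(2)[of x] LIMSEQ_unique by blast
qed

lemma sub4:
  fixes f1 f2 f3 f4 :: "nat \<Rightarrow> real \<Rightarrow> real"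
  assumes b1: "\<And>n x. \<bar>f1 n x\<bar> \<le> B" and l1: "\<And>n x y. \<bar>f1 n x - f1 n y\<bar> \<le> B * \<bar>x - y\<bar>"
    and b2: "\<And>n x. \<bar>f2 n x\<bar> \<le> B" and l2: "\<And>n x y. \<bar>f2 n x - f2 n y\<bar> \<le> B * \<bar>x - y\<bar>"
    and b3: "\<And>n x. \<bar>f3 n x\<bar> \<le> B" and l3: "\<And>n x y. \<bar>f3 n x - f3 n y\<bar> \<le> B * \<bar>x - y\<bar>"
    and b4: "\<And>n x. \<bar>f4 n x\<bar> \<le> B" and l4: "\<And>n x y. \<bar>f4 n x - f4 n y\<bar> \<le> B * \<bar>x - y\<bar>"
  shows "\<exists>r. strict_mono r \<and> (\<forall>x. convergent (\<lambda>n. f1 (r n) x) \<and> convergent (\<lambda>n. f2 (r n) x)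
            \<and> convergent (\<lambda>n. f3 (r n) x) \<and> convergent (\<lambda>n. f4 (r n) x))"
proof -
  obtain d1 where d1: "strict_mono d1" "\<And>x. convergent (\<lambda>n. f1 (d1 n) x)"
    using pointwise_subseq[where f=f1 and M=B and L=B, OF b1 l1] by blast
  obtain d2 where d2: "strict_mono d2" "\<And>x. convergent (\<lambda>n. f2 (d1 (d2 n)) x)"
    using pointwise_subseq[where f="\<lambda>n. f2 (d1 n)" and M=B and L=B, OF b2 l2] by blast
  obtain d3 where d3: "strict_mono d3" "\<And>x. convergent (\<lambda>n. f3 (d1 (d2 (d3 n))) x)"
    using pointwise_subseq[where f="\<lambda>n. f3 (d1 (d2 n))" and M=B and L=B, OF b3 l3] by blast
  obtain d4 where d4: "strict_mono d4" "\<And>x. convergent (\<lambda>n. f4 (d1 (d2 (d3 (d4 n)))) x)"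
    using pointwise_subseq[where f="\<lambda>n. f4 (d1 (d2 (d3 n)))" and M=B and L=B, OF b4 l4] by blast
  define r where "r = d1 \<circ> d2 \<circ> d3 \<circ> d4"
  have r: "strict_mono r" unfolding r_def using d1 d2 d3 d4 by (intro strict_mono_o) auto
  have s234: "strict_mono (d2 \<circ> d3 \<circ> d4)" using d2 d3 d4 by (intro strict_mono_o) auto
  have s34: "strict_mono (d3 \<circ> d4)" using d3 d4 by (intro strict_mono_o) auto
  have "convergent (\<lambda>n. f1 (r n) x)" for x
    using convergent_subseq_convergent[OF d1(2)[of x] s234] unfolding r_def by (simp add: comp_def)
  moreover have "convergent (\<lambda>n. f2 (r n) x)" for x
    using convergent_subseq_convergent[OF d2(2)[of x] s34] unfolding r_def by (simp add: comp_def)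
  moreover have "convergent (\<lambda>n. f3 (r n) x)" for x
    using convergent_subseq_convergent[OF d3(2)[of x] d4(1)] unfolding r_def by (simp add: comp_def)
  moreover have "convergent (\<lambda>n. f4 (r n) x)" for x
    using d4(2)[of x] unfolding r_def by (simp add: comp_def)
  ultimately show ?thesis using r by blast
qed

context mfg begin

lemma C1_cH: "C1 f \<Longrightarrow> C1 (\<lambda>x. H (f x))" by (rule C1_comp[OF C1_H])
lemma C1_cH1: "C1 f \<Longrightarrow> C1 (\<lambda>x. H1 (f x))" by (rule C1_comp[OF C1_H1])
lemma C1_cH2: "C1 f \<Longrightarrow> C1 (\<lambda>x. H2 (f x))" by (rule C1_comp[OF C1_H2])

lemma uniform_bounds: "\<exists>B. \<forall>lam u u1 u2 m m1 m2. sol H V \<alpha> \<gamma> \<epsilon> a1 b1 b3 Cb KV lam u u1 u2 m m1 m2 \<longrightarrow>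
   (\<forall>x. \<bar>u x\<bar> \<le> B \<and> \<bar>u1 x\<bar> \<le> B \<and> \<bar>u2 x\<bar> \<le> B \<and> \<bar>m x\<bar> \<le> B \<and> \<bar>m1 x\<bar> \<le> B \<and> \<bar>m2 x\<bar> \<le> B)"
proof -
  obtain h where h: "\<And>p. \<bar>p\<bar> \<le> cU1 \<Longrightarrow> H2 p \<le> h"
  proof -
    have "compact (H2 ` {-cU1..cU1})" by (rule compact_continuous_image[OF continuous_on_subset[OF cH2]]) auto
    then have "bounded (H2 ` {-cU1..cU1})" by (rule compact_imp_bounded)
    then obtain b where b: "\<forall>y\<in>H2 ` {-cU1..cU1}. norm y \<le> b" unfolding bounded_iff by blast
    show ?thesis
    proof (rule that[of b])
      fix p :: real assume "\<bar>p\<bar> \<le> cU1"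
      then have "p \<in> {-cU1..cU1}" by auto
      then have "\<bar>H2 p\<bar> \<le> b" using b by auto
      then show "H2 p \<le> b" by linarith
    qed
  qed
  define B where "B = max cM0 (max cU1 (max cM1 (max cU2 (cG + (h * cM0 + 1) * cU2))))"
  show ?thesis
  proof (intro exI allI impI)
    fix lam u u1 u2 m m1 m2 x
    assume "sol H V \<alpha> \<gamma> \<epsilon> a1 b1 b3 Cb KV lam u u1 u2 m m1 m2"
    then interpret s: sol H V \<alpha> \<gamma> \<epsilon> a1 b1 b3 Cb KV lam u u1 u2 m m1 m2 .
    have "\<bar>u x\<bar> \<le> B" using s.u_bd[of x] unfolding B_def by (simp add: le_max_iff_disj)
    moreover have "\<bar>u1 x\<bar> \<le> B" using s.u1_bd[of x] unfolding B_def by (simp add: le_max_iff_disj)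
    moreover have "\<bar>u2 x\<bar> \<le> B" using s.u2_bd[of x] unfolding B_def by (simp add: le_max_iff_disj)
    moreover have "\<bar>m x\<bar> \<le> B" using s.m_bd[of x] unfolding B_def by (simp add: le_max_iff_disj)
    moreover have "\<bar>m1 x\<bar> \<le> B" using s.m1_bd[of x] unfolding B_def by (simp add: le_max_iff_disj)
    moreover have "\<bar>m2 x\<bar> \<le> B" using s.m2_bd[OF h, of x] unfolding B_def by (simp add: le_max_iff_disj)
    ultimately show "\<bar>u x\<bar> \<le> B \<and> \<bar>u1 x\<bar> \<le> B \<and> \<bar>u2 x\<bar> \<le> B \<and> \<bar>m x\<bar> \<le> B \<and> \<bar>m1 x\<bar> \<le> B \<and> \<bar>m2 x\<bar> \<le> B"
      by blast
  qed
qed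

lemma closed_set:
  assumes mbar: "mbar > 0"
  shows "closed {lam \<in> {0..1::real}. \<exists>u m. C2_half u \<and> C2_half m \<and>
                   (\<forall>x. m x \<ge> mbar) \<and> F_zero H V \<alpha> \<epsilon> u m lam}" (is "closed ?S")
  unfolding closed_sequential_limits
proof (intro allI impI, elim conjE)
  fix ls l assume mem: "\<forall>n. ls n \<in> ?S" and lim: "ls \<longlonglongrightarrow> l"
  let ?P = "\<lambda>n u m. C2_half u \<and> C2_half m \<and> (\<forall>x. m x \<ge> mbar) \<and> F_zero H V \<alpha> \<epsilon> u m (ls n)"
  have "\<forall>n. \<exists>u. \<exists>m. ?P n u m" using mem by blast
  then obtain U where "\<forall>n. \<exists>m. ?P n (U n) m" using choice[of "\<lambda>n u. \<exists>m. ?P n u m"] by blast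
  then obtain M where UM: "\<And>n. ?P n (U n) (M n)" using choice[of "\<lambda>n m. ?P n (U n) m"] by blast
  have lsI: "ls n \<in> {0..1}" for n using mem by blast
  have S: "sol H V \<alpha> \<gamma> \<epsilon> a1 b1 b3 Cb KV (ls n) (U n) (deriv (U n)) (deriv (deriv (U n)))
      (M n) (deriv (M n)) (deriv (deriv (M n)))" for n
  proof (rule sol_of[OF lsI])
    show "C2_half (U n)" "C2_half (M n)" "F_zero H V \<alpha> \<epsilon> (U n) (M n) (ls n)" using UM[of n] by auto
    show "\<And>x. M n x > 0" using UM[of n] mbar by (meson less_le_trans)
  qed
  obtain B where B: "\<And>lam u u1 u2 m m1 m2 x. sol H V \<alpha> \<gamma> \<epsilon> a1 b1 b3 Cb KV lam u u1 u2 m m1 m2 \<Longrightarrow>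
     \<bar>u x\<bar> \<le> B \<and> \<bar>u1 x\<bar> \<le> B \<and> \<bar>u2 x\<bar> \<le> B \<and> \<bar>m x\<bar> \<le> B \<and> \<bar>m1 x\<bar> \<le> B \<and> \<bar>m2 x\<bar> \<le> B"
    using uniform_bounds by blast
  define u0 where "u0 n = U n" for n
  define u1 where "u1 n = deriv (U n)" for n
  define u2 where "u2 n = deriv (deriv (U n))" for n
  define m0 where "m0 n = M n" for n
  define m1 where "m1 n = deriv (M n)" for n
  define m2 where "m2 n = deriv (deriv (M n))" for n
  have S': "sol H V \<alpha> \<gamma> \<epsilon> a1 b1 b3 Cb KV (ls n) (u0 n) (u1 n) (u2 n) (m0 n) (m1 n) (m2 n)" for n
    unfolding u0_def u1_def u2_def m0_def m1_def m2_def by (rule S)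
  have bd: "\<bar>u0 n x\<bar> \<le> B" "\<bar>u1 n x\<bar> \<le> B" "\<bar>u2 n x\<bar> \<le> B" "\<bar>m0 n x\<bar> \<le> B" "\<bar>m1 n x\<bar> \<le> B" "\<bar>m2 n x\<bar> \<le> B" for n x
    using B[OF S'[of n], of x] by auto
  have du0: "(u0 n has_real_derivative u1 n x) (at x)" for n x using sol.du[OF S'] .
  have du1: "(u1 n has_real_derivative u2 n x) (at x)" for n x using sol.du1[OF S'] .
  have dm0: "(m0 n has_real_derivative m1 n x) (at x)" for n x using sol.dm[OF S'] .
  have dm1: "(m1 n has_real_derivative m2 n x) (at x)" for n x using sol.dm1[OF S'] .
  have mge: "m0 n x \<ge> mbar" for n x using UM[of n] unfolding m0_def by blast
  obtain r where r: "strict_mono r" and cv: "\<And>x. convergent (\<lambda>n. u0 (r n) x)" "\<And>x. convergent (\<lambda>n. u1 (r n) x)"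
     "\<And>x. convergent (\<lambda>n. m0 (r n) x)" "\<And>x. convergent (\<lambda>n. m1 (r n) x)"
    using sub4[of u0 B u1 m0 m1, OF bd(1) deriv_lip[OF du0 bd(2)] bd(2) deriv_lip[OF du1 bd(3)]
         bd(4) deriv_lip[OF dm0 bd(5)] bd(5) deriv_lip[OF dm1 bd(6)]] by blast
  define Ul where "Ul x = lim (\<lambda>n. u0 (r n) x)" for x
  define U1l where "U1l x = lim (\<lambda>n. u1 (r n) x)" for x
  define Ml where "Ml x = lim (\<lambda>n. m0 (r n) x)" for x
  define M1l where "M1l x = lim (\<lambda>n. m1 (r n) x)" for x
  have tU: "(\<lambda>n. u0 (r n) x) \<longlonglongrightarrow> Ul x" for x unfolding Ul_def using cv(1) convergent_LIMSEQ_iff by blast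
  have tU1: "(\<lambda>n. u1 (r n) x) \<longlonglongrightarrow> U1l x" for x unfolding U1l_def using cv(2) convergent_LIMSEQ_iff by blast
  have tM: "(\<lambda>n. m0 (r n) x) \<longlonglongrightarrow> Ml x" for x unfolding Ml_def using cv(3) convergent_LIMSEQ_iff by blast
  have tM1: "(\<lambda>n. m1 (r n) x) \<longlonglongrightarrow> M1l x" for x unfolding M1l_def using cv(4) convergent_LIMSEQ_iff by blast
  have tl: "(\<lambda>n. ls (r n)) \<longlonglongrightarrow> l" using LIMSEQ_subseq_LIMSEQ[OF lim r] by (simp add: comp_def)
  have l01: "l \<in> {0..1}"
  proof -
    have "0 \<le> l" by (rule LIMSEQ_le_const[OF lim]) (use lsI in auto)
    moreover have "l \<le> 1" by (rule LIMSEQ_le_const2[OF lim]) (use lsI in auto)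
    ultimately show ?thesis by simp
  qed
  have Mlge: "Ml x \<ge> mbar" for x by (rule LIMSEQ_le_const[OF tM]) (use mge in auto)
  have Mlpos: "Ml x > 0" for x using Mlge[of x] mbar by linarith
  define Wu where "Wu x = Gu l x (Ul x) (U1l x) (Ml x) (M1l x)" for x
  define Wm where "Wm x = Gm l x (Ul x) (U1l x) (Ml x) (M1l x)" for x
  have Gdnz: "1 + \<epsilon>\<^sup>2 + \<epsilon> * H2 (U1l x) * Ml x \<noteq> 0" for x
    using Gd_ge[OF Mlpos[of x], of "U1l x"] unfolding Gd_def by simp
  have tGu: "(\<lambda>n. Gu (ls (r n)) x (u0 (r n) x) (u1 (r n) x) (m0 (r n) x) (m1 (r n) x)) \<longlonglongrightarrow> Wu x" for x
    unfolding Wu_def Gu_def Gf_def Gg_def Gd_def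
    by (intro tendsto_intros tU tU1 tM tM1 tl) (use Gdnz[of x] Mlpos[of x] in auto)
  have tGm: "(\<lambda>n. Gm (ls (r n)) x (u0 (r n) x) (u1 (r n) x) (m0 (r n) x) (m1 (r n) x)) \<longlonglongrightarrow> Wm x" for x
    unfolding Wm_def Gm_def Gu_def Gf_def Gg_def Gd_def
    by (intro tendsto_intros tU tU1 tM tM1 tl) (use Gdnz[of x] Mlpos[of x] in auto)
  have tu2: "(\<lambda>n. u2 (r n) x) \<longlonglongrightarrow> Wu x" for x
    using tGu[of x] sol_G(1)[OF S'] by simp
  have tm2: "(\<lambda>n. m2 (r n) x) \<longlonglongrightarrow> Wm x" for x
    using tGm[of x] sol_G(2)[OF S'] by simp
  have iU: "U1l integrable_on {x..y} \<and> Ul y - Ul x = integral {x..y} U1l" if "x \<le> y" for x y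
    using int_limit[of "\<lambda>n. u0 (r n)" "\<lambda>n. u1 (r n)" B Ul U1l x y, OF du0 bd(2) tU tU1 that] by blast
  have iU1: "Wu integrable_on {x..y} \<and> U1l y - U1l x = integral {x..y} Wu" if "x \<le> y" for x y
    using int_limit[of "\<lambda>n. u1 (r n)" "\<lambda>n. u2 (r n)" B U1l Wu x y, OF du1 bd(3) tU1 tu2 that] by blast
  have iM: "M1l integrable_on {x..y} \<and> Ml y - Ml x = integral {x..y} M1l" if "x \<le> y" for x y
    using int_limit[of "\<lambda>n. m0 (r n)" "\<lambda>n. m1 (r n)" B Ml M1l x y, OF dm0 bd(5) tM tM1 that] by blast
  have iM1: "Wm integrable_on {x..y} \<and> M1l y - M1l x = integral {x..y} Wm" if "x \<le> y" for x y
    using int_limit[of "\<lambda>n. m1 (r n)" "\<lambda>n. m2 (r n)" B M1l Wm x y, OF dm1 bd(6) tM1 tm2 that] by blast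
  have B0: "B \<ge> 0" using bd(1)[of 0 0] by linarith
  have bU1: "\<bar>U1l x\<bar> \<le> B" for x by (rule limit_bound[OF tU1 bd(2)])
  have bM1: "\<bar>M1l x\<bar> \<le> B" for x by (rule limit_bound[OF tM1 bd(5)])
  have bWu: "\<bar>Wu x\<bar> \<le> B" for x by (rule limit_bound[OF tu2 bd(3)])
  have bWm: "\<bar>Wm x\<bar> \<le> B" for x by (rule limit_bound[OF tm2 bd(6)])
  have cU: "continuous_on UNIV Ul" by (rule lip_cont[OF int_lip[OF iU bU1] B0])
  have cU1: "continuous_on UNIV U1l" by (rule lip_cont[OF int_lip[OF iU1 bWu] B0])
  have cM: "continuous_on UNIV Ml" by (rule lip_cont[OF int_lip[OF iM bM1] B0])
  have cM1: "continuous_on UNIV M1l" by (rule lip_cont[OF int_lip[OF iM1 bWm] B0])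
  have Mlnz: "\<forall>x\<in>UNIV. Ml x \<noteq> 0" using Mlpos by (metis less_irrefl)
  have Gdnz': "\<forall>x\<in>UNIV. 1 + \<epsilon>\<^sup>2 + \<epsilon> * H2 (U1l x) * Ml x \<noteq> 0" using Gdnz by blast
  have cWu: "continuous_on UNIV Wu"
    unfolding Wu_def[abs_def] Gu_def Gf_def Gg_def Gd_def
    using cU cU1 cM cM1 cV Mlnz Gdnz' by (intro continuous_intros) auto
  have cWm: "continuous_on UNIV Wm"
    unfolding Wm_def[abs_def] Gm_def Gu_def Gf_def Gg_def Gd_def
    using cU cU1 cM cM1 cV Mlnz Gdnz' by (intro continuous_intros) auto
  have dU: "(Ul has_real_derivative U1l x) (at x)" for x by (rule int_deriv[OF _ cU1]) (use iU in blast)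
  have dU1: "(U1l has_real_derivative Wu x) (at x)" for x by (rule int_deriv[OF _ cWu]) (use iU1 in blast)
  have dM: "(Ml has_real_derivative M1l x) (at x)" for x by (rule int_deriv[OF _ cM1]) (use iM in blast)
  have dM1: "(M1l has_real_derivative Wm x) (at x)" for x by (rule int_deriv[OF _ cWm]) (use iM1 in blast)
  have pU: "periodic1 Ul" by (rule limit_periodic[OF _ tU]) (use sol.pu[OF S'] in blast)
  have pU1: "periodic1 U1l" by (rule limit_periodic[OF _ tU1]) (use sol.pu1[OF S'] in blast)
  have pM: "periodic1 Ml" by (rule limit_periodic[OF _ tM]) (use sol.pm[OF S'] in blast)
  have pM1: "periodic1 M1l" by (rule limit_periodic[OF _ tM1]) (use sol.pm1[OF S'] in blast)
  have pWu: "periodic1 Wu" using pU pU1 pM pM1 Vp unfolding periodic1_def Wu_def Gu_def Gf_def Gg_def Gd_def by simp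
  have pWm: "periodic1 Wm" using pU pU1 pM pM1 Vp unfolding periodic1_def Wm_def Gm_def Gu_def Gf_def Gg_def Gd_def by simp
  have C1U: "C1 Ul" by (rule C1I[OF dU cU1])
  have C1U1: "C1 U1l" by (rule C1I[OF dU1 cWu])
  have C1M: "C1 Ml" by (rule C1I[OF dM cM1])
  have C1M1: "C1 M1l" by (rule C1I[OF dM1 cWm])
  have Mlpos': "\<And>x. Ml x > 0" by (rule Mlpos)
  have Gdnz'': "\<And>x. 1 + \<epsilon>\<^sup>2 + \<epsilon> * H2 (U1l x) * Ml x \<noteq> 0" by (rule Gdnz)
  have C1Gu: "C1 (\<lambda>x. Gu l x (Ul x) (U1l x) (Ml x) (M1l x))"
    unfolding Gu_def Gf_def Gg_def Gd_def
    by (intro C1_div C1_add C1_diff C1_mult C1_const C1_powr C1_cH C1_cH1 C1_cH2 C1U C1U1 C1M C1M1 C1_V Mlpos' Gdnz'')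
  have C1Wu: "C1 Wu" using C1Gu unfolding Wu_def[abs_def] .
  have C1Gm: "C1 (\<lambda>x. Gm l x (Ul x) (U1l x) (Ml x) (M1l x))"
    unfolding Gm_def Gg_def
    by (intro C1_diff C1_add C1_mult C1_const C1_cH1 C1_cH2 C1U C1U1 C1M C1M1 C1Gu)
  have C1Wm: "C1 Wm" using C1Gm unfolding Wm_def[abs_def] .
  have hWu: "holder_half Wu" using C1Wu pWu holder_from_C1 unfolding C1_def by blast
  have hWm: "holder_half Wm" using C1Wm pWm holder_from_C1 unfolding C1_def by blast
  have eU: "deriv Ul = U1l" using DERIV_imp_deriv[OF dU] by blast
  have eU1: "deriv U1l = Wu" using DERIV_imp_deriv[OF dU1] by blast
  have eM: "deriv Ml = M1l" using DERIV_imp_deriv[OF dM] by blast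
  have eM1: "deriv M1l = Wm" using DERIV_imp_deriv[OF dM1] by blast
  have C2U: "C2_half Ul"
    unfolding C2_half_def Ck_def
  proof (intro conjI allI impI pU)
    fix j :: nat and x :: real assume "j < 2"
    then consider "j = 0" | "j = 1" by linarith
    then show "(deriv ^^ j) Ul differentiable at x"
      by cases (use dU dU1 in \<open>auto simp: eU real_differentiable_def\<close>)
  next
    show "continuous_on UNIV ((deriv ^^ 2) Ul)" using cWu by (simp add: numeral_2_eq_2 eU eU1)
    show "holder_half ((deriv ^^ 2) Ul)" using hWu by (simp add: numeral_2_eq_2 eU eU1)
  qed
  have C2M: "C2_half Ml"
    unfolding C2_half_def Ck_def
  proof (intro conjI allI impI pM)
    fix j :: nat and x :: real assume "j < 2"
    then consider "j = 0" | "j = 1" by linarith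
    then show "(deriv ^^ j) Ml differentiable at x"
      by cases (use dM dM1 in \<open>auto simp: eM real_differentiable_def\<close>)
  next
    show "continuous_on UNIV ((deriv ^^ 2) Ml)" using cWm by (simp add: numeral_2_eq_2 eM eM1)
    show "holder_half ((deriv ^^ 2) Ml)" using hWm by (simp add: numeral_2_eq_2 eM eM1)
  qed
  have e2U: "(deriv ^^ 2) Ul = Wu" by (simp add: numeral_2_eq_2 eU eU1)
  have e2M: "(deriv ^^ 2) Ml = Wm" by (simp add: numeral_2_eq_2 eM eM1)
  have FZ: "F_zero H V \<alpha> \<epsilon> Ul Ml l"
    unfolding F_zero_def
  proof
    fix x
    have dd: "deriv (\<lambda>y. H1 (U1l y) * Ml y) x = H2 (U1l x) * Wu x * Ml x + H1 (U1l x) * M1l x"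
    proof (rule DERIV_imp_deriv)
      show "((\<lambda>y. H1 (U1l y) * Ml y) has_real_derivative H2 (U1l x) * Wu x * Ml x + H1 (U1l x) * M1l x) (at x)"
        by (rule derivative_eq_intros dU1 dM refl | simp)+
    qed
    show "F1 H V \<alpha> \<epsilon> Ul Ml l x = 0 \<and> F2 H \<epsilon> Ul Ml x = 0"
      unfolding F1_def F2_def e2U e2M eU eM dd
      using G_eqs[OF Mlpos[of x], where a="Ul x" and lam=l and x=x and b="U1l x" and d="M1l x"]
      unfolding Wu_def Wm_def by simp
  qed
  show "l \<in> ?S" using l01 C2U C2M Mlge FZ by blast
qed

end


theorem mainTheorem11:
  fixes H V :: "real \<Rightarrow> real" and \<alpha> \<gamma> \<epsilon> mbar :: real
  assumes H_C2: "Ck 2 H"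
    and V_cont: "periodic1 V" "continuous_on UNIV V"
    and alpha_pos: "\<alpha> > 0"
    and A1: "\<gamma> > 1" "\<exists>C1 C2 C3. C1 > 0 \<and> C2 > 0 \<and> C3 > 0 \<and>
              (\<forall>p. - C1 + C2 * \<bar>p\<bar> powr \<gamma> \<le> H p \<and> H p \<le> C1 + C3 * \<bar>p\<bar> powr \<gamma>)"
    and A2: "\<exists>C1 C2 C3. C1 > 0 \<and> C2 > 0 \<and> C3 > 0 \<and>
              (\<forall>p. - C1 + C2 * \<bar>p\<bar> powr \<gamma> \<le> p * deriv H p - H p \<and>
                   p * deriv H p - H p \<le> C1 + C3 * \<bar>p\<bar> powr \<gamma>)"
    and A3: "Ck 2 V"
    and A4: "convex_on UNIV H"
    and A5: "Ck 4 H"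
    and A6: "\<gamma> < 2"
    and A7: "\<exists>Cb>0. \<forall>p. \<bar>deriv H p\<bar> \<le> Cb * (1 + \<bar>p\<bar> powr (\<gamma> - 1))"
    and eps: "0 < \<epsilon>" "\<epsilon> \<le> 1"
    and mbar_pos: "mbar > 0"
    and apriori: "\<And>lam u m. lam \<in> {0..1} \<Longrightarrow> C2_half u \<Longrightarrow> C2_half m \<Longrightarrow>
                    (\<forall>x. m x > 0) \<Longrightarrow> F_zero H V \<alpha> \<epsilon> u m lam \<Longrightarrow> (\<forall>x. m x > mbar)"
  shows "closed {lam \<in> {0..1::real}. \<exists>u m. C2_half u \<and> C2_half m \<and>
                   (\<forall>x. m x \<ge> mbar) \<and> F_zero H V \<alpha> \<epsilon> u m lam}"
  proof -
  obtain b1 c2 b3 where A1': "b1 > 0" "c2 > 0" "b3 > 0"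
    "\<forall>p. - b1 + c2 * \<bar>p\<bar> powr \<gamma> \<le> H p \<and> H p \<le> b1 + b3 * \<bar>p\<bar> powr \<gamma>"
    using A1(2) by blast
  obtain a1 c2' c3' where A2': "a1 > 0" "c2' > 0" "c3' > 0"
    "\<forall>p. - a1 + c2' * \<bar>p\<bar> powr \<gamma> \<le> p * deriv H p - H p \<and> p * deriv H p - H p \<le> a1 + c3' * \<bar>p\<bar> powr \<gamma>"
    using A2 by blast
  obtain Cb where Cb: "Cb > 0" "\<forall>p. \<bar>deriv H p\<bar> \<le> Cb * (1 + \<bar>p\<bar> powr (\<gamma> - 1))" using A7 by blast
  obtain K0 where K0: "\<And>x. \<bar>V x\<bar> \<le> K0" using periodic1_bounded[OF V_cont] by blast
  define KV where "KV = max K0 0"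
  have M: "mfg H V \<alpha> \<gamma> \<epsilon> a1 b1 b3 Cb KV"
  proof (rule mfg.intro)
    show "Ck 4 H" by (rule A5)
    show "periodic1 V" by (rule V_cont(1))
    show "Ck 2 V" by (rule A3)
    show "\<alpha> > 0" by (rule alpha_pos)
    show "1 < \<gamma>" by (rule A1(1))
    show "\<gamma> < 2" by (rule A6)
    show "convex_on UNIV H" by (rule A4)
    show "0 < \<epsilon>" "\<epsilon> \<le> 1" by (rule eps(1), rule eps(2))
    show "\<And>p. - b1 \<le> H p"
    proof -
      fix p
      have "0 \<le> c2 * \<bar>p\<bar> powr \<gamma>" using A1'(2) by simp
      moreover have "- b1 + c2 * \<bar>p\<bar> powr \<gamma> \<le> H p" using A1'(4) by blast
      ultimately show "- b1 \<le> H p" by linarith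
    qed
    show "\<And>p. H p \<le> b1 + b3 * \<bar>p\<bar> powr \<gamma>" using A1'(4) by blast
    show "b1 \<ge> 0" "b3 \<ge> 0" using A1' by auto
    show "\<And>p. - a1 \<le> p * deriv H p - H p"
    proof -
      fix p
      have "0 \<le> c2' * \<bar>p\<bar> powr \<gamma>" using A2'(2) by simp
      moreover have "- a1 + c2' * \<bar>p\<bar> powr \<gamma> \<le> p * deriv H p - H p" using A2'(4) by blast
      ultimately show "- a1 \<le> p * deriv H p - H p" by linarith
    qed
    show "a1 \<ge> 0" using A2' by simp
    show "\<And>p. \<bar>deriv H p\<bar> \<le> Cb * (1 + \<bar>p\<bar> powr (\<gamma> - 1))" using Cb by blast
    show "Cb \<ge> 0" using Cb by simp
    show "\<And>x. \<bar>V x\<bar> \<le> KV" unfolding KV_def using K0 by (meson max.coboundedI1)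
    show "KV \<ge> 0" unfolding KV_def by simp
  qed
  show ?thesis by (rule mfg.closed_set[OF M mbar_pos])
qed

end
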